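(* Let $G$ be a connected graph on $n$ vertices with $\lambda_{2}(D(G))\leq\frac{17-\sqrt{329}}{2}$. Then either $G\cong K_{n}$, or $G\cong K_{s}^{t}$ for some integers $2\leq t\leq s$ with $s+t=n$, or $G\cong K^{n_{1},n_{2},\ldots,n_{k}}_{n}$ for some $k\geq 2$ and positive integers $n_1,\dots,n_k$ with $\sum_{i=1}^{k}n_{i}+1=n$.
   Context: $D(G)$ is the distance matrix of $G$ (entries are graph distances), with eigenvalues $\lambda_{1}(D(G))\geq\lambda_{2}(D(G))\geq\cdots$. $K_{s}^{t}$ ($2\le t\le s$) denotes the graph on $n=s+t$ vertices obtained from the complete graph $K_s$ by attaching a pendant edge (a new vertex of degree 1) to each of $t$ distinct vertices of $K_s$. $K^{n_{1},n_{2},\ldots,n_{k}}_{n}$ ($k\ge 2$, $n=\sum n_i+1$) denotes the graph having a vertex $v$ of degree $n-1$ such that $G-v$ is the disjoint union of complete graphs $K_{n_1},\dots,K_{n_k}$. *)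

theory Defs
  imports Complex_Main "Jordan_Normal_Form.Char_Poly"
begin

definition simple_graph :: "nat \<Rightarrow> (nat \<Rightarrow> nat \<Rightarrow> bool) \<Rightarrow> bool" where
  "simple_graph n E \<longleftrightarrow> (\<forall>x y. E x y \<longrightarrow> x < n \<and> y < n \<and> x \<noteq> y \<and> E y x)"

definition graph_connected :: "nat \<Rightarrow> (nat \<Rightarrow> nat \<Rightarrow> bool) \<Rightarrow> bool" where
  "graph_connected n E \<longleftrightarrow> (\<forall>x<n. \<forall>y<n. E\<^sup>*\<^sup>* x y)"

definition gdist :: "(nat \<Rightarrow> nat \<Rightarrow> bool) \<Rightarrow> nat \<Rightarrow> nat \<Rightarrow> nat" where
  "gdist E x y = (LEAST k. (E ^^ k) x y)"

definition distance_matrix :: "nat \<Rightarrow> (nat \<Rightarrow> nat \<Rightarrow> bool) \<Rightarrow> real mat" where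
  "distance_matrix n E = mat n n (\<lambda>(i, j). real (gdist E i j))"

definition eigenvalues_desc :: "real mat \<Rightarrow> real list" where
  "eigenvalues_desc A = rev (sorted_list_of_multiset (proots (char_poly A)))"

definition lambda2 :: "real mat \<Rightarrow> real" where
  "lambda2 A = eigenvalues_desc A ! 1"

definition graph_iso ::
  "nat \<Rightarrow> (nat \<Rightarrow> nat \<Rightarrow> bool) \<Rightarrow> nat \<Rightarrow> (nat \<Rightarrow> nat \<Rightarrow> bool) \<Rightarrow> bool" where
  "graph_iso n E m F \<longleftrightarrow>
     (\<exists>f. bij_betw f {0..<n} {0..<m} \<and> (\<forall>x<n. \<forall>y<n. E x y \<longleftrightarrow> F (f x) (f y)))"

definition complete_graph :: "nat \<Rightarrow> nat \<Rightarrow> nat \<Rightarrow> bool" where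
  "complete_graph n x y \<longleftrightarrow> x < n \<and> y < n \<and> x \<noteq> y"

(* K_s^t on {0..<s+t}: clique on {0..<s}, pendant vertex s+i attached to i for i<t *)
definition pendant_edge :: "nat \<Rightarrow> nat \<Rightarrow> nat \<Rightarrow> nat \<Rightarrow> bool" where
  "pendant_edge s t x y \<longleftrightarrow> s \<le> x \<and> x < s + t \<and> y = x - s"

definition Kst :: "nat \<Rightarrow> nat \<Rightarrow> nat \<Rightarrow> nat \<Rightarrow> bool" where
  "Kst s t x y \<longleftrightarrow> (x < s \<and> y < s \<and> x \<noteq> y) \<or> pendant_edge s t x y \<or> pendant_edge s t y x"

(* K_n^{n_1,...,n_k} on {0..<sum ns + 1}: vertex 0 is the dominating vertex,
   the vertices 1..sum ns are split into consecutive blocks of sizes n_1,...,n_k,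
   each block a clique *)
definition block_of :: "nat list \<Rightarrow> nat \<Rightarrow> nat" where
  "block_of ns j = (LEAST i. j \<le> sum_list (take (Suc i) ns))"

definition Kcliques :: "nat list \<Rightarrow> nat \<Rightarrow> nat \<Rightarrow> bool" where
  "Kcliques ns x y \<longleftrightarrow> x < sum_list ns + 1 \<and> y < sum_list ns + 1 \<and> x \<noteq> y \<and>
     (x = 0 \<or> y = 0 \<or> block_of ns x = block_of ns y)"

end

theory Submission
  imports Defs
begin

lemma real_sym_eigenvector:
  fixes A :: "real mat"
  assumes A: "A \<in> carrier_mat n n" and n: "0 < n" and sym: "transpose_mat A = A"
  shows "\<exists>e x. x \<in> carrier_vec n \<and> x \<noteq> 0\<^sub>v n \<and> A *\<^sub>v x = e \<cdot>\<^sub>v x"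
proof -
  define Ac where "Ac = map_mat complex_of_real A"
  have Ac: "Ac \<in> carrier_mat n n" using A by (simp add: Ac_def)
  obtain as where cp: "char_poly Ac = (\<Prod>a\<leftarrow>as. [:- a, 1:])" and len: "length as = n"
    using char_poly_factorized[OF Ac] by blast
  from len n have "as \<noteq> []" by auto
  then obtain a where a: "a \<in> set as" by (cases as) auto
  have "poly (char_poly Ac) a = 0" unfolding cp by (rule linear_poly_root[OF a])
  hence "eigenvalue Ac a" using eigenvalue_root_char_poly[OF Ac] by simp
  then obtain v where v: "v \<in> carrier_vec n" "v \<noteq> 0\<^sub>v n" "Ac *\<^sub>v v = a \<cdot>\<^sub>v v"
    unfolding eigenvalue_def eigenvector_def using Ac by auto
  have ev: "(\<Sum>j<n. complex_of_real (A $$ (i,j)) * v $ j) = a * v $ i" if i: "i < n" for i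
  proof -
    have "(Ac *\<^sub>v v) $ i = (a \<cdot>\<^sub>v v) $ i" using v(3) by simp
    thus ?thesis using i A v(1) Ac
      by (simp add: Ac_def scalar_prod_def lessThan_atLeast0 mult.commute)
  qed
  define S where "S = (\<Sum>i<n. \<Sum>j<n. complex_of_real (A $$ (i,j)) * v $ j * cnj (v $ i))"
  define N where "N = (\<Sum>i<n. v $ i * cnj (v $ i))"
  have SN: "S = a * N"
  proof -
    have "S = (\<Sum>i<n. (\<Sum>j<n. complex_of_real (A $$ (i,j)) * v $ j) * cnj (v $ i))"
      unfolding S_def by (simp add: sum_distrib_right)
    also have "\<dots> = (\<Sum>i<n. a * v $ i * cnj (v $ i))" using ev by simp
    finally show ?thesis unfolding N_def by (simp add: sum_distrib_left mult.assoc)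
  qed
  have symA: "A $$ (i,j) = A $$ (j,i)" if "i < n" "j < n" for i j
    using that A sym by (metis carrier_matD(1) carrier_matD(2) index_transpose_mat(1))
  have cS: "cnj S = S"
  proof -
    have "cnj S = (\<Sum>i<n. \<Sum>j<n. complex_of_real (A $$ (i,j)) * cnj (v $ j) * v $ i)"
      unfolding S_def by (simp add: cnj_sum)
    also have "\<dots> = (\<Sum>j<n. \<Sum>i<n. complex_of_real (A $$ (i,j)) * cnj (v $ j) * v $ i)"
      by (rule sum.swap)
    also have "\<dots> = S" unfolding S_def
      by (intro sum.cong refl) (simp add: symA mult.commute mult.left_commute)
    finally show ?thesis .
  qed
  have Nre: "N = complex_of_real (\<Sum>i<n. (Re (v $ i))^2 + (Im (v $ i))^2)"
    unfolding N_def by (simp add: complex_mult_cnj)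
  have "\<exists>i<n. v $ i \<noteq> 0" using v(1,2) by (metis carrier_vecD eq_vecI index_zero_vec(1,2))
  then obtain i0 where i0: "i0 < n" "v $ i0 \<noteq> 0" by auto
  have Npos: "(\<Sum>i<n. (Re (v $ i))^2 + (Im (v $ i))^2) > 0"
  proof (rule sum_pos2[of _ i0])
    show "0 < (Re (v $ i0))^2 + (Im (v $ i0))^2" using i0(2) complex_eq_iff
      by (simp add: sum_power2_gt_zero_iff)
  qed (use i0 in auto)
  have "cnj a * N = a * N" using cS SN Nre by (metis complex_cnj_complex_of_real complex_cnj_mult)
  moreover have "N \<noteq> 0" unfolding Nre using Npos by (simp only: of_real_eq_0_iff)
  ultimately have "cnj a = a" by simp
  hence areal: "a = complex_of_real (Re a)" by (metis complex_eq_iff complex_cnj_complex_of_real cnj.simps(1) cnj.simps(2) Re_complex_of_real Im_complex_of_real neg_equal_zero)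
  define r where "r = Re a"
  have evr: "(\<Sum>j<n. A $$ (i,j) * Re (v $ j)) = r * Re (v $ i) \<and>
             (\<Sum>j<n. A $$ (i,j) * Im (v $ j)) = r * Im (v $ i)" if i: "i < n" for i
  proof -
    have "(\<Sum>j<n. complex_of_real (A $$ (i,j)) * v $ j) = complex_of_real r * v $ i"
      using ev[OF i] areal r_def by simp
    from arg_cong[OF this, of Re] arg_cong[OF this, of Im] show ?thesis
      by (simp add: Re_sum Im_sum)
  qed
  define xr where "xr = vec n (\<lambda>i. Re (v $ i))"
  define xi where "xi = vec n (\<lambda>i. Im (v $ i))"
  have mv: "A *\<^sub>v x = r \<cdot>\<^sub>v x" if "x = xr \<or> x = xi" for x
    using that A evr unfolding xr_def xi_def
    by (auto intro!: eq_vecI simp: scalar_prod_def lessThan_atLeast0)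
  have "xr \<noteq> 0\<^sub>v n \<or> xi \<noteq> 0\<^sub>v n"
  proof (rule ccontr)
    assume "\<not> ?thesis"
    hence "Re (v $ i0) = 0" "Im (v $ i0) = 0" using i0 unfolding xr_def xi_def
      by (metis index_vec index_zero_vec(1))+
    thus False using i0 complex_eq_iff by auto
  qed
  thus ?thesis using mv unfolding xr_def xi_def by (metis vec_carrier)
qed

definition hh :: "nat \<Rightarrow> real vec \<Rightarrow> real mat" where
  "hh n w = mat n n (\<lambda>(i,j). (if i = j then 1 else 0) - (2 / (w \<bullet> w)) * w $ i * w $ j)"

lemma hh_carrier[simp]: "hh n w \<in> carrier_mat n n" by (simp add: hh_def)

lemma hh_dims[simp]: "dim_row (hh n w) = n" "dim_col (hh n w) = n" by (simp_all add: hh_def)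

lemma hh_sym: "transpose_mat (hh n w) = hh n w"
  by (rule eq_matI) (auto simp: hh_def)

lemma sum_if_sq: "(\<Sum>k<(n::nat). (if k = 0 then 1 else 0) * (if k = 0 then 1 else 0)) = (if 0 < n then 1 else (0::real))"
  by (induct n) auto
lemma sum_if_eq1: "(\<Sum>k<(n::nat). if i = k then f k else 0) = (if i < n then f i else (0::real))"
  by (induct n) auto
lemma sum_if_eq2: "(\<Sum>k<(n::nat). if k = i then f k else 0) = (if i < n then f i else (0::real))"
  by (induct n) auto

lemma sum_delta_left: "i < n \<Longrightarrow> (\<Sum>k<(n::nat). (if i = k then 1 else 0) * f k) = (f i :: real)"
  by (simp add: if_distrib[of "\<lambda>x. x * _"] sum_if_eq1 sum_if_eq2 cong: if_cong)

lemma sum_delta_right: "j < n \<Longrightarrow> (\<Sum>k<(n::nat). f k * (if k = j then 1 else 0)) = (f j :: real)"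
  by (simp add: if_distrib[of "\<lambda>x. _ * x"] sum_if_eq1 sum_if_eq2 cong: if_cong)

lemma hh_sq: assumes w: "w \<in> carrier_vec n" shows "hh n w * hh n w = 1\<^sub>m n"
proof (rule eq_matI)
  define c where "c = 2 / (w \<bullet> w)"
  have ww: "w \<bullet> w = (\<Sum>k<n. w $ k * w $ k)" using w by (simp add: scalar_prod_def lessThan_atLeast0)
  have cc: "c * c * (w \<bullet> w) = 2 * c" unfolding c_def by (cases "w \<bullet> w = 0") (auto simp: field_simps)
  fix i j assume i: "i < dim_row (1\<^sub>m n)" and j: "j < dim_col (1\<^sub>m n)"
  hence i: "i < n" and j: "j < n" by auto
  have "(hh n w * hh n w) $$ (i,j) = (\<Sum>k<n. ((if i = k then 1 else 0) - c * w $ i * w $ k) * ((if k = j then 1 else 0) - c * w $ k * w $ j))"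
    using i j by (simp add: hh_def c_def scalar_prod_def lessThan_atLeast0 row_def col_def)
  also have "\<dots> = (\<Sum>k<n. (if i = k then 1 else 0) * (if k = j then 1 else 0))
     - (\<Sum>k<n. (if i = k then 1 else 0) * (c * w $ k * w $ j))
     - (\<Sum>k<n. (c * w $ i * w $ k) * (if k = j then 1 else 0))
     + c * c * w $ i * w $ j * (\<Sum>k<n. w $ k * w $ k)"
    by (simp add: algebra_simps sum.distrib sum_subtractf sum_distrib_left)
  also have "\<dots> = (if i = j then 1 else 0) - c * w $ i * w $ j - c * w $ i * w $ j + c * c * w $ i * w $ j * (w \<bullet> w)"
    using i j by (simp add: sum_delta_left sum_delta_right ww)
  also have "\<dots> = (if i = j then 1 else 0) + (c * c * (w \<bullet> w) - 2 * c) * w $ i * w $ j"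
    by (simp add: algebra_simps)
  also have "\<dots> = (if i = j then 1 else 0)" using cc by simp
  finally show "(hh n w * hh n w) $$ (i,j) = 1\<^sub>m n $$ (i,j)" using i j by simp
qed (auto simp: hh_def)

lemma sprod_self_zero: assumes "v \<in> carrier_vec n" "v \<bullet> v = (0::real)" "i < n" shows "v $ i = 0"
proof -
  have "(\<Sum>k\<in>{0..<n}. v $ k * v $ k) = 0" using assms(1,2) unfolding scalar_prod_def by simp
  moreover have "\<forall>k\<in>{0..<n}. 0 \<le> v $ k * v $ k" by simp
  ultimately have "\<forall>k\<in>{0..<n}. v $ k * v $ k = 0" using sum_nonneg_eq_0_iff[of "{0..<n}" "\<lambda>k. v $ k * v $ k"] by simp
  thus ?thesis using assms(3) by simp
qed

lemma hh_e0:
  assumes y: "y \<in> carrier_vec n" and yy: "y \<bullet> y = 1" and n: "0 < n"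
  shows "hh n (y - unit_vec n 0) *\<^sub>v unit_vec n 0 = y"
proof (rule eq_vecI)
  define w where "w = y - unit_vec n 0"
  have w: "w \<in> carrier_vec n" using y by (simp add: w_def)
  have wi: "w $ i = y $ i - (if i = 0 then 1 else 0)" if "i < n" for i
    using that y by (simp add: w_def unit_vec_def)
  have ww: "w \<bullet> w = 2 - 2 * y $ 0"
  proof -
    have "w \<bullet> w = (\<Sum>k<n. (y $ k - (if k = 0 then 1 else 0)) * (y $ k - (if k = 0 then 1 else 0)))"
      using w wi by (simp add: scalar_prod_def lessThan_atLeast0)
    also have "\<dots> = (\<Sum>k<n. y $ k * y $ k - 2 * (if k = 0 then y $ k else 0) + (if k = 0 then 1 else 0))"
      by (intro sum.cong) (auto simp: algebra_simps)
    also have "\<dots> = (\<Sum>k<n. y $ k * y $ k) - 2 * (\<Sum>k<n. (if k = 0 then y $ k else 0)) + (\<Sum>k<n. (if k = 0 then 1 else 0))"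
      by (simp add: sum_subtractf sum.distrib flip: sum_distrib_left)
    also have "\<dots> = y \<bullet> y - 2 * y $ 0 + 1" using n y
      by (simp only: sum_if_eq2) (simp add: scalar_prod_def lessThan_atLeast0)
    finally show ?thesis using yy by simp
  qed
  fix i assume "i < dim_vec y"
  hence i: "i < n" using y by simp
  have "(hh n w *\<^sub>v unit_vec n 0) $ i = (if i = 0 then 1 else 0) - (2 / (w \<bullet> w)) * w $ i * w $ 0"
  proof -
    have "(hh n w *\<^sub>v unit_vec n 0) $ i = (\<Sum>k<n. ((if i = k then 1 else 0) - (2 / (w \<bullet> w)) * w $ i * w $ k) * (if k = 0 then 1 else 0))"
      using i by (simp add: hh_def scalar_prod_def lessThan_atLeast0 row_def unit_vec_def)
    also have "\<dots> = (if i = 0 then 1 else 0) - (2 / (w \<bullet> w)) * w $ i * w $ 0"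
      by (rule sum_delta_right[OF n])
    finally show ?thesis .
  qed
  also have "\<dots> = y $ i"
  proof (cases "y $ 0 = 1")
    case True
    hence "w \<bullet> w = 0" using ww by simp
    have "w $ i = 0" using sprod_self_zero[OF w \<open>w \<bullet> w = 0\<close> i] .
    thus ?thesis using wi[OF i] \<open>w \<bullet> w = 0\<close> by simp
  next
    case False
    have w0: "w $ 0 = y $ 0 - 1" using wi[OF n] by simp
    have c0: "(2 / (w \<bullet> w)) * w $ 0 = -1" using False unfolding ww w0 by (simp add: field_simps)
    have "(2 / (w \<bullet> w)) * w $ i * w $ 0 = w $ i * ((2 / (w \<bullet> w)) * w $ 0)" by (simp only: mult_ac)
    also have "\<dots> = - w $ i" using c0 by simp
    finally show ?thesis using wi[OF i] by simp
  qed
  finally show "(hh n (y - unit_vec n 0) *\<^sub>v unit_vec n 0) $ i = y $ i" unfolding w_def .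
qed (use y in simp)


lemma spectral:
  fixes A :: "real mat"
  assumes "A \<in> carrier_mat n n" "transpose_mat A = A"
  shows "\<exists>P \<in> carrier_mat n n. transpose_mat P * P = 1\<^sub>m n \<and> diagonal_mat (transpose_mat P * A * P)"
  using assms
proof (induct n arbitrary: A)
  case 0
  show ?case by (rule bexI[of _ "1\<^sub>m 0"]) (use 0 in \<open>auto simp: diagonal_mat_def\<close>)
next
  case (Suc m)
  note A = Suc(2) and sym = Suc(3)
  define n where "n = Suc m"
  have An: "A \<in> carrier_mat n n" using A n_def by simp
  obtain e x where x: "x \<in> carrier_vec n" "x \<noteq> 0\<^sub>v n" and ex: "A *\<^sub>v x = e \<cdot>\<^sub>v x"
    using real_sym_eigenvector[OF An _ sym] n_def by auto
  have "\<exists>i<n. x $ i \<noteq> 0" using x by (metis carrier_vecD eq_vecI index_zero_vec(1,2))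
  then obtain i0 where i0: "i0 < n" "x $ i0 \<noteq> 0" by auto
  have xx: "x \<bullet> x > 0"
  proof -
    have "x \<bullet> x = (\<Sum>k\<in>{0..<n}. x $ k * x $ k)" using x by (simp add: scalar_prod_def)
    also have "\<dots> > 0" by (rule sum_pos2[of _ i0]) (use i0 in \<open>auto simp: zero_less_mult_iff linorder_neq_iff\<close>)
    finally show ?thesis .
  qed
  define y where "y = (1 / sqrt (x \<bullet> x)) \<cdot>\<^sub>v x"
  have y: "y \<in> carrier_vec n" using x by (simp add: y_def)
  have yy: "y \<bullet> y = 1"
  proof -
    have "y \<bullet> y = (1 / sqrt (x \<bullet> x)) * ((1 / sqrt (x \<bullet> x)) * (x \<bullet> x))"
      unfolding y_def using x by (simp add: smult_scalar_prod_distrib scalar_prod_smult_distrib)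
    also have "\<dots> = 1" using xx by (simp add: field_simps)
    finally show ?thesis .
  qed
  have ey: "A *\<^sub>v y = e \<cdot>\<^sub>v y"
    unfolding y_def using mult_mat_vec[OF An x(1)] ex by (simp add: smult_smult_assoc mult.commute)
  have n0: "0 < n" using n_def by simp
  define H where "H = hh n (y - unit_vec n 0)"
  have H: "H \<in> carrier_mat n n" unfolding H_def by simp
  have HH: "H * H = 1\<^sub>m n" unfolding H_def by (rule hh_sq) (use y in simp)
  have HT: "transpose_mat H = H" unfolding H_def by (rule hh_sym)
  have He0: "H *\<^sub>v unit_vec n 0 = y" unfolding H_def by (rule hh_e0[OF y yy n0])
  have Hy: "H *\<^sub>v y = unit_vec n 0"
    using assoc_mult_mat_vec[OF H H, of "unit_vec n 0"] HH He0 by simp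
  define A' where "A' = H * A * H"
  have A': "A' \<in> carrier_mat n n" unfolding A'_def using H An by simp
  have A'T: "transpose_mat A' = A'"
  proof -
    have "transpose_mat A' = transpose_mat H * transpose_mat (H * A)"
      unfolding A'_def using H An by (intro transpose_mult[of _ n n]) auto
    also have "\<dots> = H * (transpose_mat A * transpose_mat H)"
      using H An HT by (subst transpose_mult[of _ n n]) auto
    also have "\<dots> = (H * A) * H" using H An HT sym by simp
    also have "\<dots> = A'" unfolding A'_def HT sym ..
    finally show ?thesis .
  qed
  have A'e0: "A' *\<^sub>v unit_vec n 0 = e \<cdot>\<^sub>v unit_vec n 0"
  proof -
    have "A' *\<^sub>v unit_vec n 0 = (H * A) *\<^sub>v (H *\<^sub>v unit_vec n 0)"
      unfolding A'_def by (rule assoc_mult_mat_vec[of _ n n _ n]) (use H An in auto)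
    also have "\<dots> = H *\<^sub>v (A *\<^sub>v (H *\<^sub>v unit_vec n 0))"
      by (rule assoc_mult_mat_vec[of _ n n _ n]) (use H An in auto)
    also have "\<dots> = e \<cdot>\<^sub>v unit_vec n 0" unfolding He0 ey using mult_mat_vec[OF H y] Hy by simp
    finally show ?thesis .
  qed
  have col0: "A' $$ (i,0) = (if i = 0 then e else 0)" if "i < n" for i
    using arg_cong[OF A'e0, of "\<lambda>v. v $ i"] that A' n0 by (auto simp: index_unit_vec)
  have row0: "A' $$ (0,j) = (if j = 0 then e else 0)" if "j < n" for j
    using col0[OF that] A'T that A' n0 by (metis carrier_matD(1,2) index_transpose_mat(1))
  define A3 where "A3 = mat m m (\<lambda>(i,j). A' $$ (Suc i, Suc j))"
  have A3: "A3 \<in> carrier_mat m m" unfolding A3_def by simp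
  have A3T: "transpose_mat A3 = A3"
    unfolding A3_def using A'T A' n_def by (intro eq_matI) (auto, metis carrier_matD(1,2) index_transpose_mat(1) Suc_less_eq)
  obtain P3 where P3: "P3 \<in> carrier_mat m m" and P3o: "transpose_mat P3 * P3 = 1\<^sub>m m"
    and P3d: "diagonal_mat (transpose_mat P3 * A3 * P3)"
    using Suc(1)[OF A3 A3T] by auto
  define Q where "Q = four_block_mat (1\<^sub>m 1) (0\<^sub>m 1 m) (0\<^sub>m m 1) P3"
  have Q: "Q \<in> carrier_mat n n" unfolding Q_def n_def using P3 by (metis four_block_carrier_mat one_carrier_mat plus_1_eq_Suc)
  define A1 where "A1 = mat 1 1 (\<lambda>_. e)"
  have A'b: "A' = four_block_mat A1 (0\<^sub>m 1 m) (0\<^sub>m m 1) A3"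
  proof (rule eq_matI)
    fix i j assume "i < dim_row (four_block_mat A1 (0\<^sub>m 1 m) (0\<^sub>m m 1) A3)" "j < dim_col (four_block_mat A1 (0\<^sub>m 1 m) (0\<^sub>m m 1) A3)"
    hence i: "i < Suc m" and j: "j < Suc m" using A3 by (auto simp: A1_def)
    show "A' $$ (i,j) = four_block_mat A1 (0\<^sub>m 1 m) (0\<^sub>m m 1) A3 $$ (i,j)"
    proof (cases "i = 0")
      case True thus ?thesis using row0[of j] j A3 n_def by (auto simp: A1_def)
    next
      case False
      then obtain i' where i': "i = Suc i'" by (cases i) auto
      show ?thesis
      proof (cases "j = 0")
        case True thus ?thesis using col0[of i] i A3 n_def False by (auto simp: A1_def)
      next
        case False
        then obtain j' where j': "j = Suc j'" by (cases j) auto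
        show ?thesis using i j A3 i' j' by (auto simp: A1_def A3_def)
      qed
    qed
  qed (use A' A3 n_def in \<open>auto simp: A1_def\<close>)
  define P where "P = H * Q"
  have P: "P \<in> carrier_mat n n" unfolding P_def using H Q by simp
  have PT: "transpose_mat P = transpose_mat Q * H"
    unfolding P_def using H Q HT by (simp add: transpose_mult[of _ n n])
  have QT: "transpose_mat Q = four_block_mat (1\<^sub>m 1) (0\<^sub>m 1 m) (0\<^sub>m m 1) (transpose_mat P3)"
    unfolding Q_def using P3 by (subst transpose_four_block_mat[of _ 1 1 _ m _ m]) auto
  have QQ: "transpose_mat Q * Q = 1\<^sub>m n"
  proof -
    have "transpose_mat Q * Q = four_block_mat (1\<^sub>m 1) (0\<^sub>m 1 m) (0\<^sub>m m 1) (transpose_mat P3 * P3)"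
      unfolding QT unfolding Q_def using P3
      by (subst mult_four_block_mat[of _ 1 1 _ m _ m _ _ 1 _ m]) auto
    also have "\<dots> = 1\<^sub>m n" unfolding P3o n_def by (rule eq_matI) auto
    finally show ?thesis .
  qed
  have PP: "transpose_mat P * P = 1\<^sub>m n"
  proof -
    have "transpose_mat P * P = transpose_mat Q * (H * H) * Q"
      unfolding PT unfolding P_def using H Q by (simp add: assoc_mult_mat[of _ n n _ n _ n])
    thus ?thesis using HH QQ Q by simp
  qed
  have PAP: "transpose_mat P * A * P = transpose_mat Q * A' * Q"
    unfolding PT unfolding P_def A'_def using H Q An by (simp add: assoc_mult_mat[of _ n n _ n _ n])
  have "transpose_mat Q * A' * Q = four_block_mat A1 (0\<^sub>m 1 m) (0\<^sub>m m 1) (transpose_mat P3 * A3 * P3)"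
    unfolding QT A'b unfolding Q_def using P3 A3
    by (subst mult_four_block_mat[of _ 1 1 _ m _ m _ _ 1 _ m], auto simp: A1_def,
        subst mult_four_block_mat[of _ 1 1 _ m _ m _ _ 1 _ m], auto)
  moreover have "diagonal_mat (four_block_mat A1 (0\<^sub>m 1 m) (0\<^sub>m m 1) (transpose_mat P3 * A3 * P3))"
    using P3d P3 A3 unfolding diagonal_mat_def by (auto simp: A1_def)
  ultimately show ?case using P PP PAP n_def by auto
qed



lemma proots_linear_prod: "proots (\<Prod>a\<leftarrow>ds. [:- a, 1:]) = mset (ds :: real list)"
proof (induct ds)
  case (Cons a ds)
  have nz: "\<forall>a. [:- a, 1::real:] \<noteq> 0" by simp
  have "(\<Prod>a\<leftarrow>ds. [:- a, 1:]) \<noteq> 0" using nz by (auto simp: prod_list_zero_iff)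
  hence "proots ([:- a, 1:] * (\<Prod>a\<leftarrow>ds. [:- a, 1:])) = proots [:- a, 1:] + proots (\<Prod>a\<leftarrow>ds. [:- a, 1:])"
    using nz by (intro proots_mult) auto
  also have "\<dots> = {#a#} + mset ds" using Cons by (simp only: proots_linear_factor minus_minus)
  finally show ?case by simp
qed simp

lemma count_gt_le1:
  fixes ds :: "real list"
  assumes "rev (sorted_list_of_multiset (mset ds)) ! 1 \<le> c"
  shows "length (filter (\<lambda>x. x > c) ds) \<le> 1"
proof -
  define L where "L = rev (sorted_list_of_multiset (mset ds))"
  have mL: "mset L = mset ds" unfolding L_def by simp
  have sL: "sorted (rev L)" unfolding L_def by simp
  have "length (filter (\<lambda>x. x > c) L) \<le> 1"
  proof (cases L)
    case (Cons a L')
    show ?thesis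
    proof (cases L')
      case (Cons b L'')
      have b: "b \<le> c" using assms unfolding L_def[symmetric] using \<open>L = a # L'\<close> Cons by simp
      have "\<forall>x\<in>set L''. x \<le> b" using sL \<open>L = a # L'\<close> Cons by (auto simp: sorted_append)
      hence "filter (\<lambda>x. x > c) L'' = []" using b by (auto simp: filter_empty_conv)
      thus ?thesis using \<open>L = a # L'\<close> Cons b by simp
    qed (use \<open>L = a # L'\<close> in simp)
  qed simp
  moreover have "length (filter (\<lambda>x. x > c) L) = length (filter (\<lambda>x. x > c) ds)"
    by (metis mL mset_filter size_mset)
  ultimately show ?thesis by simp
qed

lemma quad_decomp:
  fixes A P :: "real mat"
  assumes A: "A \<in> carrier_mat n n" and P: "P \<in> carrier_mat n n"
    and PP: "P * transpose_mat P = 1\<^sub>m n"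
    and DA: "transpose_mat P * A * P = D" and Dd: "diagonal_mat D"
    and x: "x \<in> carrier_vec n" and x': "x' \<in> carrier_vec n"
  shows "x \<bullet> (A *\<^sub>v x') - c * (x \<bullet> x') =
    (\<Sum>i<n. (D $$ (i,i) - c) * (transpose_mat P *\<^sub>v x) $ i * (transpose_mat P *\<^sub>v x') $ i)"
proof -
  have PT: "transpose_mat P \<in> carrier_mat n n" using P by simp
  have D: "D \<in> carrier_mat n n" using DA A P by auto
  have A_eq: "A = P * D * transpose_mat P"
  proof -
    have "P * D * transpose_mat P = (P * transpose_mat P) * A * (P * transpose_mat P)"
      unfolding DA[symmetric] using A P PT by (simp add: assoc_mult_mat[of _ n n _ n _ n])
    thus ?thesis using PP A by simp
  qed
  define y where "y = transpose_mat P *\<^sub>v x"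
  define y' where "y' = transpose_mat P *\<^sub>v x'"
  have y: "y \<in> carrier_vec n" "y' \<in> carrier_vec n" using PT x x' by (auto simp: y_def y'_def)
  have "x \<bullet> (A *\<^sub>v x') = x \<bullet> (P *\<^sub>v (D *\<^sub>v y'))"
    unfolding A_eq y'_def using P D PT x' by (simp add: assoc_mult_mat_vec[of _ n n _ n])
  also have "\<dots> = y \<bullet> (D *\<^sub>v y')"
    unfolding y_def using transpose_vec_mult_scalar[OF P, of "D *\<^sub>v y'" x] D y x by simp
  also have "\<dots> = (\<Sum>i<n. D $$ (i,i) * y $ i * y' $ i)"
  proof -
    have "(D *\<^sub>v y') $ i = D $$ (i,i) * y' $ i" if i: "i < n" for i
    proof -
      have "(D *\<^sub>v y') $ i = (\<Sum>k<n. D $$ (i,k) * y' $ k)"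
        using i D y by (simp add: scalar_prod_def lessThan_atLeast0 row_def)
      also have "\<dots> = (\<Sum>k<n. if k = i then D $$ (i,i) * y' $ i else 0)"
        using Dd D i unfolding diagonal_mat_def by (intro sum.cong) auto
      also have "\<dots> = D $$ (i,i) * y' $ i" using i by (simp add: sum_if_eq2)
      finally show ?thesis .
    qed
    thus ?thesis using y D by (simp add: scalar_prod_def lessThan_atLeast0 mult.assoc mult.left_commute)
  qed
  finally have 1: "x \<bullet> (A *\<^sub>v x') = (\<Sum>i<n. D $$ (i,i) * y $ i * y' $ i)" .
  have "x \<bullet> x' = x \<bullet> (P *\<^sub>v y')"
    unfolding y'_def using P PT x' PP by (simp flip: assoc_mult_mat_vec[of _ n n _ n])
  also have "\<dots> = y \<bullet> y'" unfolding y_def using transpose_vec_mult_scalar[OF P y(2) x] by simp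
  finally have 2: "x \<bullet> x' = (\<Sum>i<n. y $ i * y' $ i)" using y by (simp add: scalar_prod_def lessThan_atLeast0)
  show ?thesis unfolding 1 2 y_def[symmetric] y'_def[symmetric]
    by (simp add: sum_distrib_left sum_subtractf[symmetric] algebra_simps)
qed

lemma lambda2_gt:
  fixes A :: "real mat" and c :: real
  assumes A: "A \<in> carrier_mat n n" and sym: "transpose_mat A = A"
    and u: "u \<in> carrier_vec n" and v: "v \<in> carrier_vec n"
    and Qu: "u \<bullet> (A *\<^sub>v u) - c * (u \<bullet> u) > 0"
    and det: "(u \<bullet> (A *\<^sub>v u) - c * (u \<bullet> u)) * (v \<bullet> (A *\<^sub>v v) - c * (v \<bullet> v))
               > (u \<bullet> (A *\<^sub>v v) - c * (u \<bullet> v))^2"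
  shows "lambda2 A > c"
proof (rule ccontr)
  assume "\<not> lambda2 A > c"
  hence l2: "lambda2 A \<le> c" by simp
  obtain P where P: "P \<in> carrier_mat n n" and PTP: "transpose_mat P * P = 1\<^sub>m n"
    and Dd: "diagonal_mat (transpose_mat P * A * P)" using spectral[OF A sym] by auto
  define D where "D = transpose_mat P * A * P"
  have PT: "transpose_mat P \<in> carrier_mat n n" using P by simp
  have PP: "P * transpose_mat P = 1\<^sub>m n" using mat_mult_left_right_inverse[OF PT P PTP] .
  have Dc: "D \<in> carrier_mat n n" unfolding D_def using P A by simp
  have sim: "similar_mat A D"
  proof -
    have "P * D * transpose_mat P = (P * transpose_mat P) * A * (P * transpose_mat P)"
      unfolding D_def using A P PT by (simp add: assoc_mult_mat[of _ n n _ n _ n])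
    hence "A = P * D * transpose_mat P" using PP A by simp
    hence "similar_mat_wit A D P (transpose_mat P)"
      using P PT A Dc PP PTP by (intro similar_mat_witI[of _ _ n]) auto
    thus ?thesis unfolding similar_mat_def by blast
  qed
  have ut: "upper_triangular D" using Dd[folded D_def] Dc unfolding diagonal_mat_def upper_triangular_def by auto
  define ds where "ds = diag_mat D"
  have lds: "length ds = n" using Dc by (simp add: ds_def diag_mat_def)
  have dsi: "ds ! i = D $$ (i,i)" if "i < n" for i using that Dc by (simp add: ds_def diag_mat_def)
  have cp: "char_poly A = (\<Prod>a\<leftarrow>ds. [:- a, 1:])"
    unfolding ds_def char_poly_similar[OF sim] by (rule char_poly_upper_triangular[OF Dc ut])
  have "length (filter (\<lambda>x. x > c) ds) \<le> 1"
    using l2 unfolding lambda2_def eigenvalues_desc_def cp proots_linear_prod by (rule count_gt_le1)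
  hence one: "card {i. i < n \<and> ds ! i > c} \<le> 1" using lds by (simp add: length_filter_conv_card)
  define Q where "Q = (\<lambda>x x'. x \<bullet> (A *\<^sub>v x') - c * (x \<bullet> x'))"
  have Qf: "Q x x' = (\<Sum>i<n. (D $$ (i,i) - c) * (transpose_mat P *\<^sub>v x) $ i * (transpose_mat P *\<^sub>v x') $ i)"
    if "x \<in> carrier_vec n" "x' \<in> carrier_vec n" for x x'
    unfolding Q_def by (rule quad_decomp[OF A P PP D_def[symmetric] Dd[folded D_def] that])
  define Y where "Y = transpose_mat P *\<^sub>v u"
  define Z where "Z = transpose_mat P *\<^sub>v v"
  define a where "a = Q u u"
  define b where "b = Q u v"
  define d where "d = Q v v"
  have a: "a = (\<Sum>i<n. (D $$ (i,i) - c) * Y $ i * Y $ i)" unfolding a_def Y_def using Qf u by simp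
  have b: "b = (\<Sum>i<n. (D $$ (i,i) - c) * Y $ i * Z $ i)" unfolding b_def Y_def Z_def using Qf u v by simp
  have d: "d = (\<Sum>i<n. (D $$ (i,i) - c) * Z $ i * Z $ i)" unfolding d_def Z_def using Qf v by simp
  have apos: "a > 0" using Qu unfolding a_def Q_def .
  have adb: "a * d > b^2" using det unfolding a_def b_def d_def Q_def .
  obtain j where j: "\<And>i. i < n \<Longrightarrow> i \<noteq> j \<Longrightarrow> D $$ (i,i) \<le> c"
  proof (cases "\<exists>j<n. ds ! j > c")
    case True
    then obtain j where j: "j < n" "ds ! j > c" by auto
    have "D $$ (i,i) \<le> c" if "i < n" "i \<noteq> j" for i
    proof (rule ccontr)
      assume "\<not> ?thesis"
      hence "{i, j} \<subseteq> {i. i < n \<and> ds ! i > c}" using that j dsi by auto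
      hence "card {i, j} \<le> card {i. i < n \<and> ds ! i > c}" by (intro card_mono) auto
      thus False using one \<open>i \<noteq> j\<close> by simp
    qed
    thus ?thesis using that by blast
  next
    case False
    show ?thesis by (rule that[of 0]) (use False dsi in force)
  qed
  have key: "(\<Sum>i<n. (D $$ (i,i) - c) * (s * Y $ i + t * Z $ i) * (s * Y $ i + t * Z $ i)) \<le> 0"
    if st: "s * Y $ j + t * Z $ j = 0" for s t
  proof -
    have "(D $$ (i,i) - c) * (s * Y $ i + t * Z $ i) * (s * Y $ i + t * Z $ i) \<le> 0" if "i < n" for i
    proof (cases "i = j")
      case True thus ?thesis using st by simp
    next
      case False
      hence "D $$ (i,i) - c \<le> 0" using j \<open>i < n\<close> by simp
      thus ?thesis by (simp add: mult_nonpos_nonneg mult.assoc)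
    qed
    thus ?thesis by (intro sum_nonpos) auto
  qed
  have expand: "(\<Sum>i<n. (D $$ (i,i) - c) * (s * Y $ i + t * Z $ i) * (s * Y $ i + t * Z $ i))
      = s * s * a + 2 * s * t * b + t * t * d" for s t
  proof -
    have "(\<Sum>i<n. (D $$ (i,i) - c) * (s * Y $ i + t * Z $ i) * (s * Y $ i + t * Z $ i))
      = (\<Sum>i<n. s * s * ((D $$ (i,i) - c) * Y $ i * Y $ i) + 2 * s * t * ((D $$ (i,i) - c) * Y $ i * Z $ i)
           + t * t * ((D $$ (i,i) - c) * Z $ i * Z $ i))"
      by (intro sum.cong) (simp_all add: algebra_simps)
    also have "\<dots> = s * s * a + 2 * s * t * b + t * t * d"
      unfolding a b d by (simp add: sum.distrib sum_distrib_left)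
    finally show ?thesis .
  qed
  show False
  proof (cases "Y $ j = 0 \<and> Z $ j = 0")
    case True
    have "s * s * a + 2 * s * t * b + t * t * d \<le> 0" for s t
      using key[of s t] True expand by simp
    from this[of 1 0] apos show False by simp
  next
    case False
    define s where "s = Z $ j"
    define t where "t = - Y $ j"
    have "s * Y $ j + t * Z $ j = 0" unfolding s_def t_def by simp
    hence le: "s * s * a + 2 * s * t * b + t * t * d \<le> 0" using key[of s t] expand[of s t] by simp
    have "a * (s * s * a + 2 * s * t * b + t * t * d) = (a * s + b * t)^2 + (a * d - b^2) * t^2"
      by (simp add: power2_eq_square algebra_simps)
    moreover have "(a * s + b * t)^2 + (a * d - b^2) * t^2 > 0"
    proof (cases "t = 0")
      case True
      hence "s \<noteq> 0" using False unfolding s_def t_def by simp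
      thus ?thesis using True apos by simp
    next
      case False
      thus ?thesis using adb by (simp add: add_nonneg_pos)
    qed
    ultimately have "a * (s * s * a + 2 * s * t * b + t * t * d) > 0" by simp
    moreover have "a * (s * s * a + 2 * s * t * b + t * t * d) \<le> 0"
      using apos le by (simp add: mult_nonneg_nonpos)
    ultimately show False by linarith
  qed
qed



definition cr :: real where "cr = -5691/10000"

definition qf :: "real list list \<Rightarrow> real list \<Rightarrow> real list \<Rightarrow> real" where
  "qf T a b = (\<Sum>l<length a. \<Sum>m<length a. a!l * b!m * (T!l!m - cr * (if l = m then 1 else 0)))"

lemma c0_le_cr: "(17 - sqrt 329) / 2 \<le> cr"
proof -
  have "181382 / 10000 \<le> sqrt 329" by (rule real_le_rsqrt) (simp add: power2_eq_square)
  thus ?thesis unfolding cr_def by simp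
qed

lemma relpowp_sym:
  assumes "\<And>x y. E x y \<Longrightarrow> E y x" shows "(E ^^ k) x y \<Longrightarrow> (E ^^ k) y x"
proof (induct k arbitrary: x y)
  case (Suc k)
  from relpowp_Suc_E[OF Suc(2)] obtain z where "(E ^^ k) x z" "E z y" by blast
  thus ?case using Suc(1) assms by (blast intro: relpowp_Suc_I2)
qed simp

lemma rel0: "(E ^^ 0) x y \<longleftrightarrow> x = y" by simp
lemma rel2: "(E ^^ 2) x y \<longleftrightarrow> (\<exists>z. E x z \<and> E z y)"
  by (simp add: numeral_2_eq_2 relcompp_apply)
lemma rel3: "(E ^^ 3) x y \<longleftrightarrow> (\<exists>z w. E x z \<and> E z w \<and> E w y)"
  by (simp add: numeral_3_eq_3 relcompp_apply) blast
lemma rel4: "(E ^^ 4) x y \<longleftrightarrow> (\<exists>z w v. E x z \<and> E z w \<and> E w v \<and> E v y)"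
  by (simp add: eval_nat_numeral relcompp_apply) blast

lemma gdist_eqI: "(E ^^ k) x y \<Longrightarrow> (\<And>j. j < k \<Longrightarrow> \<not> (E ^^ j) x y) \<Longrightarrow> gdist E x y = k"
  unfolding gdist_def by (rule Least_equality) (auto simp: not_less[symmetric])

lemma gdist0: "gdist E x x = 0" by (rule gdist_eqI) auto

lemma gdist1: "E x y \<Longrightarrow> x \<noteq> y \<Longrightarrow> gdist E x y = 1"
  by (rule gdist_eqI) auto

lemma gdist2: "E x z \<Longrightarrow> E z y \<Longrightarrow> \<not> E x y \<Longrightarrow> x \<noteq> y \<Longrightarrow> gdist E x y = 2"
  by (rule gdist_eqI) (auto simp: rel2 less_2_cases_iff)

lemma less_3_cases: "j < (3::nat) \<longleftrightarrow> j = 0 \<or> j = 1 \<or> j = 2" by auto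
lemma less_4_cases: "j < (4::nat) \<longleftrightarrow> j = 0 \<or> j = 1 \<or> j = 2 \<or> j = 3" by auto

lemma gdist3: "E x z \<Longrightarrow> E z w \<Longrightarrow> E w y \<Longrightarrow> \<not> E x y \<Longrightarrow> x \<noteq> y \<Longrightarrow> (\<And>v. E x v \<Longrightarrow> \<not> E v y)
  \<Longrightarrow> gdist E x y = 3"
  by (rule gdist_eqI) (auto simp: rel2 rel3 less_3_cases)

lemma gdist4: "E x z \<Longrightarrow> E z w \<Longrightarrow> E w v \<Longrightarrow> E v y \<Longrightarrow> \<not> E x y \<Longrightarrow> x \<noteq> y \<Longrightarrow> (\<And>v. E x v \<Longrightarrow> \<not> E v y)
  \<Longrightarrow> (\<And>v v'. E x v \<Longrightarrow> E v v' \<Longrightarrow> \<not> E v' y) \<Longrightarrow> gdist E x y = 4"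
  by (rule gdist_eqI) (auto simp: rel2 rel3 rel4 less_4_cases)

lemma gdist_sym: assumes "\<And>x y. E x y \<Longrightarrow> E y x" shows "gdist E x y = gdist E y x"
  unfolding gdist_def using relpowp_sym[of E, OF assms] by metis

lemma sg_sym: "simple_graph n E \<Longrightarrow> E x y \<Longrightarrow> E y x" unfolding simple_graph_def by blast
lemma sg_irrefl: "simple_graph n E \<Longrightarrow> \<not> E x x" unfolding simple_graph_def by blast
lemma sg_lt: "simple_graph n E \<Longrightarrow> E x y \<Longrightarrow> x < n \<and> y < n" unfolding simple_graph_def by blast

lemma dm_carrier: "distance_matrix n E \<in> carrier_mat n n" by (simp add: distance_matrix_def)

lemma dm_sym: "simple_graph n E \<Longrightarrow> transpose_mat (distance_matrix n E) = distance_matrix n E"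
  by (rule eq_matI) (auto simp: distance_matrix_def intro!: gdist_sym dest: sg_sym)

lemma vform:
  fixes M :: "real mat"
  assumes M: "M \<in> carrier_mat n n" and f: "\<And>l. l < k \<Longrightarrow> f l < n" and g: "\<And>m. m < k' \<Longrightarrow> g m < n"
  shows "vec n (\<lambda>i. \<Sum>l<k. if i = f l then x l else 0) \<bullet> (M *\<^sub>v vec n (\<lambda>j. \<Sum>m<k'. if j = g m then y m else 0))
     = (\<Sum>l<k. \<Sum>m<k'. x l * y m * M $$ (f l, g m))"
proof -
  have inner: "(M *\<^sub>v vec n (\<lambda>j. \<Sum>m<k'. if j = g m then y m else 0)) $ i = (\<Sum>m<k'. y m * M $$ (i, g m))"
    if i: "i < n" for i
  proof -
    have "(M *\<^sub>v vec n (\<lambda>j. \<Sum>m<k'. if j = g m then y m else 0)) $ i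
        = (\<Sum>j<n. M $$ (i,j) * (\<Sum>m<k'. if j = g m then y m else 0))"
      using i M by (simp add: scalar_prod_def lessThan_atLeast0 row_def)
    also have "\<dots> = (\<Sum>j<n. \<Sum>m<k'. if j = g m then M $$ (i,j) * y m else 0)"
      by (simp add: sum_distrib_left if_distrib cong: if_cong)
    also have "\<dots> = (\<Sum>m<k'. \<Sum>j<n. if j = g m then M $$ (i,j) * y m else 0)" by (rule sum.swap)
    also have "\<dots> = (\<Sum>m<k'. y m * M $$ (i, g m))"
      by (intro sum.cong refl) (simp add: sum_if_eq2 g)
    finally show ?thesis .
  qed
  have "vec n (\<lambda>i. \<Sum>l<k. if i = f l then x l else 0) \<bullet> (M *\<^sub>v vec n (\<lambda>j. \<Sum>m<k'. if j = g m then y m else 0))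
     = (\<Sum>i<n. (\<Sum>l<k. if i = f l then x l else 0) * (\<Sum>m<k'. y m * M $$ (i, g m)))"
    using M inner by (simp add: scalar_prod_def lessThan_atLeast0)
  also have "\<dots> = (\<Sum>i<n. \<Sum>l<k. if i = f l then x l * (\<Sum>m<k'. y m * M $$ (i, g m)) else 0)"
    by (simp add: sum_distrib_right) (intro sum.cong refl, simp)
  also have "\<dots> = (\<Sum>l<k. \<Sum>i<n. if i = f l then x l * (\<Sum>m<k'. y m * M $$ (i, g m)) else 0)" by (rule sum.swap)
  also have "\<dots> = (\<Sum>l<k. x l * (\<Sum>m<k'. y m * M $$ (f l, g m)))"
    by (intro sum.cong refl) (simp add: sum_if_eq2 f)
  also have "\<dots> = (\<Sum>l<k. \<Sum>m<k'. x l * y m * M $$ (f l, g m))"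
    by (simp add: sum_distrib_left mult.assoc)
  finally show ?thesis .
qed

lemma config:
  assumes sg: "simple_graph n E" and l2: "lambda2 (distance_matrix n E) \<le> cr"
    and vs: "distinct vs" "set vs \<subseteq> {0..<n}"
    and T: "\<And>l m. l < length vs \<Longrightarrow> m < length vs \<Longrightarrow> real (gdist E (vs!l) (vs!m)) = T!l!m"
    and la: "length a = length vs" "length b = length vs"
    and pd: "qf T a a > 0" "qf T a a * qf T b b > (qf T a b)^2"
  shows False
proof -
  define k where "k = length vs"
  define D where "D = distance_matrix n E"
  have D: "D \<in> carrier_mat n n" unfolding D_def by (rule dm_carrier)
  have Ds: "transpose_mat D = D" unfolding D_def by (rule dm_sym[OF sg])
  have f: "\<And>l. l < k \<Longrightarrow> vs ! l < n" using vs(2) nth_mem unfolding k_def by fastforce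
  define mk where "mk = (\<lambda>x. vec n (\<lambda>i. \<Sum>l<k. if i = vs ! l then x ! l else (0::real)))"
  have B: "mk x \<bullet> (D *\<^sub>v mk y) - cr * (mk x \<bullet> mk y) = qf T x y" if "length x = k" for x y
  proof -
    have 1: "mk x \<bullet> (D *\<^sub>v mk y) = (\<Sum>l<k. \<Sum>m<k. x!l * y!m * D $$ (vs!l, vs!m))"
      unfolding mk_def by (rule vform[OF D f f])
    have "mk x \<bullet> mk y = mk x \<bullet> (1\<^sub>m n *\<^sub>v mk y)" unfolding mk_def by simp
    also have "\<dots> = (\<Sum>l<k. \<Sum>m<k. x!l * y!m * (1\<^sub>m n :: real mat) $$ (vs!l, vs!m))"
      unfolding mk_def by (rule vform[OF one_carrier_mat f f])
    also have "\<dots> = (\<Sum>l<k. \<Sum>m<k. x!l * y!m * (if l = m then 1 else 0))"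
      using f vs(1) unfolding k_def by (intro sum.cong refl) (auto simp: nth_eq_iff_index_eq)
    finally have 2: "mk x \<bullet> mk y = \<dots>" .
    have 3: "D $$ (vs!l, vs!m) = T!l!m" if "l < k" "m < k" for l m
      using T[of l m] that f unfolding D_def distance_matrix_def k_def by simp
    show ?thesis unfolding 1 2 qf_def that
      by (simp add: 3 sum_distrib_left sum_subtractf[symmetric] algebra_simps)
  qed
  have "lambda2 D > cr"
  proof (rule lambda2_gt[OF D Ds])
    show "mk a \<in> carrier_vec n" "mk b \<in> carrier_vec n" unfolding mk_def by auto
    show "mk a \<bullet> (D *\<^sub>v mk a) - cr * (mk a \<bullet> mk a) > 0" using B[of a a] la pd k_def by simp
    show "(mk a \<bullet> (D *\<^sub>v mk a) - cr * (mk a \<bullet> mk a)) * (mk b \<bullet> (D *\<^sub>v mk b) - cr * (mk b \<bullet> mk b))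
       > (mk a \<bullet> (D *\<^sub>v mk b) - cr * (mk a \<bullet> mk b))^2"
      using B[of a a] B[of b b] B[of a b] la pd k_def qf_def by simp
  qed
  thus False using l2 unfolding D_def by simp
qed



lemma less_5_cases: "j < (5::nat) \<longleftrightarrow> j = 0 \<or> j = 1 \<or> j = 2 \<or> j = 3 \<or> j = 4" by auto

lemma gdist_le: "(E ^^ k) x y \<Longrightarrow> gdist E x y \<le> k"
  unfolding gdist_def by (rule Least_le)

lemma gdist_holds: "(E ^^ k) x y \<Longrightarrow> (E ^^ gdist E x y) x y"
  unfolding gdist_def by (rule LeastI)

locale G =
  fixes n :: nat and E :: "nat \<Rightarrow> nat \<Rightarrow> bool"
  assumes sg: "simple_graph n E" and conn: "graph_connected n E"
    and l2: "lambda2 (distance_matrix n E) \<le> cr"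
begin

lemma esym: "E x y \<Longrightarrow> E y x" using sg_sym[OF sg] .
lemma gsym: "gdist E x y = gdist E y x" by (rule gdist_sym) (rule esym)
lemma irr: "\<not> E x x" using sg_irrefl[OF sg] .
lemma ltn: "E x y \<Longrightarrow> x < n" "E x y \<Longrightarrow> y < n" using sg_lt[OF sg] by auto

lemma d1: "E x y \<Longrightarrow> gdist E x y = Suc 0" using gdist1[of E x y] irr by auto
lemma d2: "E x z \<Longrightarrow> E z y \<Longrightarrow> \<not> E x y \<Longrightarrow> x \<noteq> y \<Longrightarrow> gdist E x y = 2"
  using gdist2[of E x z y] by simp
lemma d3: "E x z \<Longrightarrow> E z w \<Longrightarrow> E w y \<Longrightarrow> \<not> E x y \<Longrightarrow> x \<noteq> y \<Longrightarrow> (\<And>v. E x v \<Longrightarrow> \<not> E v y)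
  \<Longrightarrow> gdist E x y = 3"
  using gdist3[of E x z w y] by simp
lemma d0: "gdist E x x = 0" by (simp add: gdist0)

lemma cfg:
  assumes "distinct vs" "set vs \<subseteq> {0..<n}"
    and "\<And>l m. l < length vs \<Longrightarrow> m < length vs \<Longrightarrow> real (gdist E (vs!l) (vs!m)) = T!l!m"
    and "length a = length vs" "length b = length vs"
    and "qf T a a > 0" "qf T a a * qf T b b > (qf T a b)^2"
  shows False
  by (rule config[OF sg l2 assms])

lemma noC4:
  assumes "E a b" "E b c" "E c d" "E d a" "\<not> E a c" "\<not> E b d" "a \<noteq> c" "b \<noteq> d"
  shows False
proof (rule cfg[of "[a,b,c,d]" "[[0,1,2,1],[1,0,1,2],[2,1,0,1],[1,2,1,0]]" "[1,1,1,1]" "[-1,1,-1,1]"])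
  show "distinct [a,b,c,d]" using assms irr by auto
  show "set [a,b,c,d] \<subseteq> {0..<n}" using assms ltn by auto
  have D01: "gdist E a b = Suc 0" by (rule d1) (use assms in \<open>auto intro: esym\<close>)
  have D01': "gdist E b a = Suc 0" using D01 gsym[of b a] by simp
  have D02: "gdist E a c = 2" by (rule d2[of a b c]) (use assms in \<open>auto intro: esym\<close>)
  have D02': "gdist E c a = 2" using D02 gsym[of c a] by simp
  have D03: "gdist E a d = Suc 0" by (rule d1) (use assms in \<open>auto intro: esym\<close>)
  have D03': "gdist E d a = Suc 0" using D03 gsym[of d a] by simp
  have D12: "gdist E b c = Suc 0" by (rule d1) (use assms in \<open>auto intro: esym\<close>)
  have D12': "gdist E c b = Suc 0" using D12 gsym[of c b] by simp
  have D13: "gdist E b d = 2" by (rule d2[of b c d]) (use assms in \<open>auto intro: esym\<close>)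
  have D13': "gdist E d b = 2" using D13 gsym[of d b] by simp
  have D23: "gdist E c d = Suc 0" by (rule d1) (use assms in \<open>auto intro: esym\<close>)
  have D23': "gdist E d c = Suc 0" using D23 gsym[of d c] by simp
  show "real (gdist E ([a,b,c,d]!l) ([a,b,c,d]!m)) = [[0,1,2,1],[1,0,1,2],[2,1,0,1],[1,2,1,0]]!l!m"
    if "l < length [a,b,c,d]" "m < length [a,b,c,d]" for l m
    using that by (auto simp: less_Suc_eq d0 D01 D01' D02 D02' D03 D03' D12 D12' D13 D13' D23 D23')
qed (simp_all add: qf_def cr_def eval_nat_numeral lessThan_Suc)

lemma noDia:
  assumes "E p q" "E p r" "E p s" "E q r" "E r s" "\<not> E q s" "q \<noteq> s"
  shows False
proof (rule cfg[of "[p,q,r,s]" "[[0,1,1,1],[1,0,1,2],[1,1,0,1],[1,2,1,0]]" "[0,1,0,1]" "[1,0,1,0]"])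
  show "distinct [p,q,r,s]" using assms irr by auto
  show "set [p,q,r,s] \<subseteq> {0..<n}" using assms ltn by auto
  have D01: "gdist E p q = Suc 0" by (rule d1) (use assms in \<open>auto intro: esym\<close>)
  have D01': "gdist E q p = Suc 0" using D01 gsym[of q p] by simp
  have D02: "gdist E p r = Suc 0" by (rule d1) (use assms in \<open>auto intro: esym\<close>)
  have D02': "gdist E r p = Suc 0" using D02 gsym[of r p] by simp
  have D03: "gdist E p s = Suc 0" by (rule d1) (use assms in \<open>auto intro: esym\<close>)
  have D03': "gdist E s p = Suc 0" using D03 gsym[of s p] by simp
  have D12: "gdist E q r = Suc 0" by (rule d1) (use assms in \<open>auto intro: esym\<close>)
  have D12': "gdist E r q = Suc 0" using D12 gsym[of r q] by simp
  have D13: "gdist E q s = 2" by (rule d2[of q p s]) (use assms in \<open>auto intro: esym\<close>)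
  have D13': "gdist E s q = 2" using D13 gsym[of s q] by simp
  have D23: "gdist E r s = Suc 0" by (rule d1) (use assms in \<open>auto intro: esym\<close>)
  have D23': "gdist E s r = Suc 0" using D23 gsym[of s r] by simp
  show "real (gdist E ([p,q,r,s]!l) ([p,q,r,s]!m)) = [[0,1,1,1],[1,0,1,2],[1,1,0,1],[1,2,1,0]]!l!m"
    if "l < length [p,q,r,s]" "m < length [p,q,r,s]" for l m
    using that by (auto simp: less_Suc_eq d0 D01 D01' D02 D02' D03 D03' D12 D12' D13 D13' D23 D23')
qed (simp_all add: qf_def cr_def eval_nat_numeral lessThan_Suc)

lemma noP4:
  assumes "E a b" "E b c" "E c d" "\<not> E a c" "\<not> E b d" "\<not> E a d" "a \<noteq> c" "b \<noteq> d" "a \<noteq> d" "E a e" "E e d"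
  shows False
proof (rule cfg[of "[a,b,c,d]" "[[0,1,2,2],[1,0,1,2],[2,1,0,1],[2,2,1,0]]" "[1,1,1,1]" "[1,-1,1,-1]"])
  show "distinct [a,b,c,d]" using assms irr by auto
  show "set [a,b,c,d] \<subseteq> {0..<n}" using assms ltn by auto
  have D01: "gdist E a b = Suc 0" by (rule d1) (use assms in \<open>auto intro: esym\<close>)
  have D01': "gdist E b a = Suc 0" using D01 gsym[of b a] by simp
  have D02: "gdist E a c = 2" by (rule d2[of a b c]) (use assms in \<open>auto intro: esym\<close>)
  have D02': "gdist E c a = 2" using D02 gsym[of c a] by simp
  have D03: "gdist E a d = 2" by (rule d2[of a e d]) (use assms in \<open>auto intro: esym\<close>)
  have D03': "gdist E d a = 2" using D03 gsym[of d a] by simp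
  have D12: "gdist E b c = Suc 0" by (rule d1) (use assms in \<open>auto intro: esym\<close>)
  have D12': "gdist E c b = Suc 0" using D12 gsym[of c b] by simp
  have D13: "gdist E b d = 2" by (rule d2[of b c d]) (use assms in \<open>auto intro: esym\<close>)
  have D13': "gdist E d b = 2" using D13 gsym[of d b] by simp
  have D23: "gdist E c d = Suc 0" by (rule d1) (use assms in \<open>auto intro: esym\<close>)
  have D23': "gdist E d c = Suc 0" using D23 gsym[of d c] by simp
  show "real (gdist E ([a,b,c,d]!l) ([a,b,c,d]!m)) = [[0,1,2,2],[1,0,1,2],[2,1,0,1],[2,2,1,0]]!l!m"
    if "l < length [a,b,c,d]" "m < length [a,b,c,d]" for l m
    using that by (auto simp: less_Suc_eq d0 D01 D01' D02 D02' D03 D03' D12 D12' D13 D13' D23 D23')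
qed (simp_all add: qf_def cr_def eval_nat_numeral lessThan_Suc)

lemma noF1:
  assumes "E x p" "E x q" "E x w" "E w y" "\<not> E p q" "\<not> E p w" "\<not> E q w" "\<not> E x y" "p \<noteq> q" "p \<noteq> w" "q \<noteq> w" "x \<noteq> y" "\<not> E p y" "p \<noteq> y" "\<And>v. E p v \<Longrightarrow> \<not> E v y" "\<not> E q y" "q \<noteq> y" "\<And>v. E q v \<Longrightarrow> \<not> E v y"
  shows False
proof (rule cfg[of "[x,p,q,w,y]" "[[0,1,1,1,2],[1,0,2,2,3],[1,2,0,2,3],[1,2,2,0,1],[2,3,3,1,0]]" "[1,1,1,1,1]" "[-2,0,0,1,-1]"])
  show "distinct [x,p,q,w,y]" using assms irr by auto
  show "set [x,p,q,w,y] \<subseteq> {0..<n}" using assms ltn by auto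
  have D01: "gdist E x p = Suc 0" by (rule d1) (use assms in \<open>auto intro: esym\<close>)
  have D01': "gdist E p x = Suc 0" using D01 gsym[of p x] by simp
  have D02: "gdist E x q = Suc 0" by (rule d1) (use assms in \<open>auto intro: esym\<close>)
  have D02': "gdist E q x = Suc 0" using D02 gsym[of q x] by simp
  have D03: "gdist E x w = Suc 0" by (rule d1) (use assms in \<open>auto intro: esym\<close>)
  have D03': "gdist E w x = Suc 0" using D03 gsym[of w x] by simp
  have D04: "gdist E x y = 2" by (rule d2[of x w y]) (use assms in \<open>auto intro: esym\<close>)
  have D04': "gdist E y x = 2" using D04 gsym[of y x] by simp
  have D12: "gdist E p q = 2" by (rule d2[of p x q]) (use assms in \<open>auto intro: esym\<close>)
  have D12': "gdist E q p = 2" using D12 gsym[of q p] by simp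
  have D13: "gdist E p w = 2" by (rule d2[of p x w]) (use assms in \<open>auto intro: esym\<close>)
  have D13': "gdist E w p = 2" using D13 gsym[of w p] by simp
  have D14: "gdist E p y = 3" by (rule d3[of p x w y]) (use assms in \<open>auto intro: esym\<close>)
  have D14': "gdist E y p = 3" using D14 gsym[of y p] by simp
  have D23: "gdist E q w = 2" by (rule d2[of q x w]) (use assms in \<open>auto intro: esym\<close>)
  have D23': "gdist E w q = 2" using D23 gsym[of w q] by simp
  have D24: "gdist E q y = 3" by (rule d3[of q x w y]) (use assms in \<open>auto intro: esym\<close>)
  have D24': "gdist E y q = 3" using D24 gsym[of y q] by simp
  have D34: "gdist E w y = Suc 0" by (rule d1) (use assms in \<open>auto intro: esym\<close>)
  have D34': "gdist E y w = Suc 0" using D34 gsym[of y w] by simp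
  show "real (gdist E ([x,p,q,w,y]!l) ([x,p,q,w,y]!m)) = [[0,1,1,1,2],[1,0,2,2,3],[1,2,0,2,3],[1,2,2,0,1],[2,3,3,1,0]]!l!m"
    if "l < length [x,p,q,w,y]" "m < length [x,p,q,w,y]" for l m
    using that by (auto simp: less_Suc_eq d0 D01 D01' D02 D02' D03 D03' D04 D04' D12 D12' D13 D13' D14 D14' D23 D23' D24 D24' D34 D34')
qed (simp_all add: qf_def cr_def eval_nat_numeral lessThan_Suc)

lemma noF3:
  assumes "E x y" "E x z" "E y z" "E x p" "E p q" "\<not> E y p" "\<not> E z p" "\<not> E x q" "y \<noteq> p" "z \<noteq> p" "x \<noteq> q" "\<not> E y q" "y \<noteq> q" "\<And>v. E y v \<Longrightarrow> \<not> E v q" "\<not> E z q" "z \<noteq> q" "\<And>v. E z v \<Longrightarrow> \<not> E v q"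
  shows False
proof (rule cfg[of "[x,y,z,p,q]" "[[0,1,1,1,2],[1,0,1,2,3],[1,1,0,2,3],[1,2,2,0,1],[2,3,3,1,0]]" "[17,23,23,20,27]" "[-35,8,8,32,-14]"])
  show "distinct [x,y,z,p,q]" using assms irr by auto
  show "set [x,y,z,p,q] \<subseteq> {0..<n}" using assms ltn by auto
  have D01: "gdist E x y = Suc 0" by (rule d1) (use assms in \<open>auto intro: esym\<close>)
  have D01': "gdist E y x = Suc 0" using D01 gsym[of y x] by simp
  have D02: "gdist E x z = Suc 0" by (rule d1) (use assms in \<open>auto intro: esym\<close>)
  have D02': "gdist E z x = Suc 0" using D02 gsym[of z x] by simp
  have D03: "gdist E x p = Suc 0" by (rule d1) (use assms in \<open>auto intro: esym\<close>)
  have D03': "gdist E p x = Suc 0" using D03 gsym[of p x] by simp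
  have D04: "gdist E x q = 2" by (rule d2[of x p q]) (use assms in \<open>auto intro: esym\<close>)
  have D04': "gdist E q x = 2" using D04 gsym[of q x] by simp
  have D12: "gdist E y z = Suc 0" by (rule d1) (use assms in \<open>auto intro: esym\<close>)
  have D12': "gdist E z y = Suc 0" using D12 gsym[of z y] by simp
  have D13: "gdist E y p = 2" by (rule d2[of y x p]) (use assms in \<open>auto intro: esym\<close>)
  have D13': "gdist E p y = 2" using D13 gsym[of p y] by simp
  have D14: "gdist E y q = 3" by (rule d3[of y x p q]) (use assms in \<open>auto intro: esym\<close>)
  have D14': "gdist E q y = 3" using D14 gsym[of q y] by simp
  have D23: "gdist E z p = 2" by (rule d2[of z x p]) (use assms in \<open>auto intro: esym\<close>)
  have D23': "gdist E p z = 2" using D23 gsym[of p z] by simp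
  have D24: "gdist E z q = 3" by (rule d3[of z x p q]) (use assms in \<open>auto intro: esym\<close>)
  have D24': "gdist E q z = 3" using D24 gsym[of q z] by simp
  have D34: "gdist E p q = Suc 0" by (rule d1) (use assms in \<open>auto intro: esym\<close>)
  have D34': "gdist E q p = Suc 0" using D34 gsym[of q p] by simp
  show "real (gdist E ([x,y,z,p,q]!l) ([x,y,z,p,q]!m)) = [[0,1,1,1,2],[1,0,1,2,3],[1,1,0,2,3],[1,2,2,0,1],[2,3,3,1,0]]!l!m"
    if "l < length [x,y,z,p,q]" "m < length [x,y,z,p,q]" for l m
    using that by (auto simp: less_Suc_eq d0 D01 D01' D02 D02' D03 D03' D04 D04' D12 D12' D13 D13' D14 D14' D23 D23' D24 D24' D34 D34')
qed (simp_all add: qf_def cr_def eval_nat_numeral lessThan_Suc)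

lemma noP5a:
  assumes "E a0 a1" "E a1 a2" "E a2 a3" "E a3 a4" "\<not> E a0 a2" "a0 \<noteq> a2" "\<not> E a1 a3" "a1 \<noteq> a3" "\<not> E a2 a4" "a2 \<noteq> a4" "\<not> E a0 a3" "a0 \<noteq> a3" "\<And>v. E a0 v \<Longrightarrow> \<not> E v a3" "\<not> E a1 a4" "a1 \<noteq> a4" "\<And>v. E a1 v \<Longrightarrow> \<not> E v a4" "a0 \<noteq> a4" "gdist E a0 a4 = 2"
  shows False
proof (rule cfg[of "[a0,a1,a2,a3,a4]" "[[0,1,2,3,2],[1,0,1,2,3],[2,1,0,1,2],[3,2,1,0,1],[2,3,2,1,0]]" "[1,1,1,1,1]" "[-1,1,0,-1,1]"])
  show "distinct [a0,a1,a2,a3,a4]" using assms irr by auto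
  show "set [a0,a1,a2,a3,a4] \<subseteq> {0..<n}" using assms ltn by auto
  have D01: "gdist E a0 a1 = Suc 0" by (rule d1) (use assms in \<open>auto intro: esym\<close>)
  have D01': "gdist E a1 a0 = Suc 0" using D01 gsym[of a1 a0] by simp
  have D02: "gdist E a0 a2 = 2" by (rule d2[of a0 a1 a2]) (use assms in \<open>auto intro: esym\<close>)
  have D02': "gdist E a2 a0 = 2" using D02 gsym[of a2 a0] by simp
  have D03: "gdist E a0 a3 = 3" by (rule d3[of a0 a1 a2 a3]) (use assms in \<open>auto intro: esym\<close>)
  have D03': "gdist E a3 a0 = 3" using D03 gsym[of a3 a0] by simp
  have D04: "gdist E a0 a4 = 2" by (rule assms(18))
  have D04': "gdist E a4 a0 = 2" using D04 gsym[of a4 a0] by simp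
  have D12: "gdist E a1 a2 = Suc 0" by (rule d1) (use assms in \<open>auto intro: esym\<close>)
  have D12': "gdist E a2 a1 = Suc 0" using D12 gsym[of a2 a1] by simp
  have D13: "gdist E a1 a3 = 2" by (rule d2[of a1 a2 a3]) (use assms in \<open>auto intro: esym\<close>)
  have D13': "gdist E a3 a1 = 2" using D13 gsym[of a3 a1] by simp
  have D14: "gdist E a1 a4 = 3" by (rule d3[of a1 a2 a3 a4]) (use assms in \<open>auto intro: esym\<close>)
  have D14': "gdist E a4 a1 = 3" using D14 gsym[of a4 a1] by simp
  have D23: "gdist E a2 a3 = Suc 0" by (rule d1) (use assms in \<open>auto intro: esym\<close>)
  have D23': "gdist E a3 a2 = Suc 0" using D23 gsym[of a3 a2] by simp
  have D24: "gdist E a2 a4 = 2" by (rule d2[of a2 a3 a4]) (use assms in \<open>auto intro: esym\<close>)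
  have D24': "gdist E a4 a2 = 2" using D24 gsym[of a4 a2] by simp
  have D34: "gdist E a3 a4 = Suc 0" by (rule d1) (use assms in \<open>auto intro: esym\<close>)
  have D34': "gdist E a4 a3 = Suc 0" using D34 gsym[of a4 a3] by simp
  show "real (gdist E ([a0,a1,a2,a3,a4]!l) ([a0,a1,a2,a3,a4]!m)) = [[0,1,2,3,2],[1,0,1,2,3],[2,1,0,1,2],[3,2,1,0,1],[2,3,2,1,0]]!l!m"
    if "l < length [a0,a1,a2,a3,a4]" "m < length [a0,a1,a2,a3,a4]" for l m
    using that by (auto simp: less_Suc_eq d0 D01 D01' D02 D02' D03 D03' D04 D04' D12 D12' D13 D13' D14 D14' D23 D23' D24 D24' D34 D34')
qed (simp_all add: qf_def cr_def eval_nat_numeral lessThan_Suc)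

lemma noP5b:
  assumes "E a0 a1" "E a1 a2" "E a2 a3" "E a3 a4" "\<not> E a0 a2" "a0 \<noteq> a2" "\<not> E a1 a3" "a1 \<noteq> a3" "\<not> E a2 a4" "a2 \<noteq> a4" "\<not> E a0 a3" "a0 \<noteq> a3" "\<And>v. E a0 v \<Longrightarrow> \<not> E v a3" "\<not> E a1 a4" "a1 \<noteq> a4" "\<And>v. E a1 v \<Longrightarrow> \<not> E v a4" "a0 \<noteq> a4" "gdist E a0 a4 = 3"
  shows False
proof (rule cfg[of "[a0,a1,a2,a3,a4]" "[[0,1,2,3,3],[1,0,1,2,3],[2,1,0,1,2],[3,2,1,0,1],[3,3,2,1,0]]" "[1,1,1,1,1]" "[-1,1,0,-1,1]"])
  show "distinct [a0,a1,a2,a3,a4]" using assms irr by auto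
  show "set [a0,a1,a2,a3,a4] \<subseteq> {0..<n}" using assms ltn by auto
  have D01: "gdist E a0 a1 = Suc 0" by (rule d1) (use assms in \<open>auto intro: esym\<close>)
  have D01': "gdist E a1 a0 = Suc 0" using D01 gsym[of a1 a0] by simp
  have D02: "gdist E a0 a2 = 2" by (rule d2[of a0 a1 a2]) (use assms in \<open>auto intro: esym\<close>)
  have D02': "gdist E a2 a0 = 2" using D02 gsym[of a2 a0] by simp
  have D03: "gdist E a0 a3 = 3" by (rule d3[of a0 a1 a2 a3]) (use assms in \<open>auto intro: esym\<close>)
  have D03': "gdist E a3 a0 = 3" using D03 gsym[of a3 a0] by simp
  have D04: "gdist E a0 a4 = 3" by (rule assms(18))
  have D04': "gdist E a4 a0 = 3" using D04 gsym[of a4 a0] by simp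
  have D12: "gdist E a1 a2 = Suc 0" by (rule d1) (use assms in \<open>auto intro: esym\<close>)
  have D12': "gdist E a2 a1 = Suc 0" using D12 gsym[of a2 a1] by simp
  have D13: "gdist E a1 a3 = 2" by (rule d2[of a1 a2 a3]) (use assms in \<open>auto intro: esym\<close>)
  have D13': "gdist E a3 a1 = 2" using D13 gsym[of a3 a1] by simp
  have D14: "gdist E a1 a4 = 3" by (rule d3[of a1 a2 a3 a4]) (use assms in \<open>auto intro: esym\<close>)
  have D14': "gdist E a4 a1 = 3" using D14 gsym[of a4 a1] by simp
  have D23: "gdist E a2 a3 = Suc 0" by (rule d1) (use assms in \<open>auto intro: esym\<close>)
  have D23': "gdist E a3 a2 = Suc 0" using D23 gsym[of a3 a2] by simp
  have D24: "gdist E a2 a4 = 2" by (rule d2[of a2 a3 a4]) (use assms in \<open>auto intro: esym\<close>)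
  have D24': "gdist E a4 a2 = 2" using D24 gsym[of a4 a2] by simp
  have D34: "gdist E a3 a4 = Suc 0" by (rule d1) (use assms in \<open>auto intro: esym\<close>)
  have D34': "gdist E a4 a3 = Suc 0" using D34 gsym[of a4 a3] by simp
  show "real (gdist E ([a0,a1,a2,a3,a4]!l) ([a0,a1,a2,a3,a4]!m)) = [[0,1,2,3,3],[1,0,1,2,3],[2,1,0,1,2],[3,2,1,0,1],[3,3,2,1,0]]!l!m"
    if "l < length [a0,a1,a2,a3,a4]" "m < length [a0,a1,a2,a3,a4]" for l m
    using that by (auto simp: less_Suc_eq d0 D01 D01' D02 D02' D03 D03' D04 D04' D12 D12' D13 D13' D14 D14' D23 D23' D24 D24' D34 D34')
qed (simp_all add: qf_def cr_def eval_nat_numeral lessThan_Suc)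

lemma noP5c:
  assumes "E a0 a1" "E a1 a2" "E a2 a3" "E a3 a4" "\<not> E a0 a2" "a0 \<noteq> a2" "\<not> E a1 a3" "a1 \<noteq> a3" "\<not> E a2 a4" "a2 \<noteq> a4" "\<not> E a0 a3" "a0 \<noteq> a3" "\<And>v. E a0 v \<Longrightarrow> \<not> E v a3" "\<not> E a1 a4" "a1 \<noteq> a4" "\<And>v. E a1 v \<Longrightarrow> \<not> E v a4" "a0 \<noteq> a4" "gdist E a0 a4 = 4"
  shows False
proof (rule cfg[of "[a0,a1,a2,a3,a4]" "[[0,1,2,3,4],[1,0,1,2,3],[2,1,0,1,2],[3,2,1,0,1],[4,3,2,1,0]]" "[2,1,1,1,2]" "[0,-2,2,-2,0]"])
  show "distinct [a0,a1,a2,a3,a4]" using assms irr by auto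
  show "set [a0,a1,a2,a3,a4] \<subseteq> {0..<n}" using assms ltn by auto
  have D01: "gdist E a0 a1 = Suc 0" by (rule d1) (use assms in \<open>auto intro: esym\<close>)
  have D01': "gdist E a1 a0 = Suc 0" using D01 gsym[of a1 a0] by simp
  have D02: "gdist E a0 a2 = 2" by (rule d2[of a0 a1 a2]) (use assms in \<open>auto intro: esym\<close>)
  have D02': "gdist E a2 a0 = 2" using D02 gsym[of a2 a0] by simp
  have D03: "gdist E a0 a3 = 3" by (rule d3[of a0 a1 a2 a3]) (use assms in \<open>auto intro: esym\<close>)
  have D03': "gdist E a3 a0 = 3" using D03 gsym[of a3 a0] by simp
  have D04: "gdist E a0 a4 = 4" by (rule assms(18))
  have D04': "gdist E a4 a0 = 4" using D04 gsym[of a4 a0] by simp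
  have D12: "gdist E a1 a2 = Suc 0" by (rule d1) (use assms in \<open>auto intro: esym\<close>)
  have D12': "gdist E a2 a1 = Suc 0" using D12 gsym[of a2 a1] by simp
  have D13: "gdist E a1 a3 = 2" by (rule d2[of a1 a2 a3]) (use assms in \<open>auto intro: esym\<close>)
  have D13': "gdist E a3 a1 = 2" using D13 gsym[of a3 a1] by simp
  have D14: "gdist E a1 a4 = 3" by (rule d3[of a1 a2 a3 a4]) (use assms in \<open>auto intro: esym\<close>)
  have D14': "gdist E a4 a1 = 3" using D14 gsym[of a4 a1] by simp
  have D23: "gdist E a2 a3 = Suc 0" by (rule d1) (use assms in \<open>auto intro: esym\<close>)
  have D23': "gdist E a3 a2 = Suc 0" using D23 gsym[of a3 a2] by simp
  have D24: "gdist E a2 a4 = 2" by (rule d2[of a2 a3 a4]) (use assms in \<open>auto intro: esym\<close>)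
  have D24': "gdist E a4 a2 = 2" using D24 gsym[of a4 a2] by simp
  have D34: "gdist E a3 a4 = Suc 0" by (rule d1) (use assms in \<open>auto intro: esym\<close>)
  have D34': "gdist E a4 a3 = Suc 0" using D34 gsym[of a4 a3] by simp
  show "real (gdist E ([a0,a1,a2,a3,a4]!l) ([a0,a1,a2,a3,a4]!m)) = [[0,1,2,3,4],[1,0,1,2,3],[2,1,0,1,2],[3,2,1,0,1],[4,3,2,1,0]]!l!m"
    if "l < length [a0,a1,a2,a3,a4]" "m < length [a0,a1,a2,a3,a4]" for l m
    using that by (auto simp: less_Suc_eq d0 D01 D01' D02 D02' D03 D03' D04 D04' D12 D12' D13 D13' D14 D14' D23 D23' D24 D24' D34 D34')
qed (simp_all add: qf_def cr_def eval_nat_numeral lessThan_Suc)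

lemma noP5:
  assumes "E a0 a1" "E a1 a2" "E a2 a3" "E a3 a4"
    "\<not> E a0 a2" "a0 \<noteq> a2" "\<not> E a1 a3" "a1 \<noteq> a3" "\<not> E a2 a4" "a2 \<noteq> a4"
    "\<not> E a0 a3" "a0 \<noteq> a3" "\<And>v. E a0 v \<Longrightarrow> \<not> E v a3"
    "\<not> E a1 a4" "a1 \<noteq> a4" "\<And>v. E a1 v \<Longrightarrow> \<not> E v a4"
    "\<not> E a0 a4" "a0 \<noteq> a4"
  shows False
proof -
  have g4: "gdist E a0 a4 \<le> 4" by (rule gdist_le) (use assms in \<open>auto simp: rel4\<close>)
  have gh: "(E ^^ gdist E a0 a4) a0 a4" by (rule gdist_holds[where k=4]) (use assms in \<open>auto simp: rel4\<close>)
  have "gdist E a0 a4 \<noteq> 0" using gh assms by (metis rel0)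
  moreover have "gdist E a0 a4 \<noteq> 1" using gh assms by (metis One_nat_def relpowp_1)
  ultimately have g: "gdist E a0 a4 = 2 \<or> gdist E a0 a4 = 3 \<or> gdist E a0 a4 = 4" using g4 by linarith
  thus False using noP5a[OF assms(1-16,18)] noP5b[OF assms(1-16,18)] noP5c[OF assms(1-16,18)] by blast
qed

end


context G begin

definition leaf :: "nat \<Rightarrow> bool" where
  "leaf p \<longleftrightarrow> p < n \<and> (\<exists>q. E p q \<and> (\<forall>z. E p z \<longrightarrow> z = q))"

definition WW :: "nat \<Rightarrow> bool" where
  "WW x \<longleftrightarrow> x < n \<and> \<not> leaf x"

definition dom :: "nat \<Rightarrow> bool" where
  "dom v \<longleftrightarrow> v < n \<and> (\<forall>u<n. u \<noteq> v \<longrightarrow> E v u)"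

lemma closure:
  assumes "x0 < n" "x0 \<in> S" "\<And>x y. x \<in> S \<Longrightarrow> E x y \<Longrightarrow> y \<in> S" "y < n"
  shows "y \<in> S"
proof -
  have "E\<^sup>*\<^sup>* x0 y" using conn assms(1,4) unfolding graph_connected_def by blast
  thus ?thesis by (induct rule: rtranclp_induct) (use assms in auto)
qed

lemma leaf_unique: "leaf p \<Longrightarrow> E p q \<Longrightarrow> E p z \<Longrightarrow> z = q"
  unfolding leaf_def by metis

lemma has_nbr: assumes "2 \<le> n" "x < n" shows "\<exists>y. E x y"
proof (rule ccontr)
  assume "\<not> ?thesis"
  hence cl: "\<And>a b. a \<in> {x} \<Longrightarrow> E a b \<Longrightarrow> b \<in> {x}" by auto
  obtain y where "y < n" "y \<noteq> x" using assms by (metis One_nat_def less_2_cases_iff less_le_trans not_less_eq pos2)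
  thus False using closure[OF assms(2) _ cl] by auto
qed

lemma two_nbrs: assumes "2 \<le> n" "WW x" shows "\<exists>y z. E x y \<and> E x z \<and> y \<noteq> z"
proof -
  obtain y where y: "E x y" using has_nbr assms unfolding WW_def by blast
  have "\<not> (\<forall>z. E x z \<longrightarrow> z = y)" using assms y unfolding WW_def leaf_def by blast
  thus ?thesis using y by blast
qed

lemma other_nbr: assumes "2 \<le> n" "WW x" shows "\<exists>z. E x z \<and> z \<noteq> b"
  using two_nbrs[OF assms] by blast

lemma leaf_or_W: "x < n \<Longrightarrow> leaf x \<or> WW x" unfolding WW_def by blast

lemma leaf_nbr_W:
  assumes "2 \<le> n" "\<not> (\<exists>v. dom v)" "leaf p" "E p q" shows "WW q"
proof (rule ccontr)
  assume "\<not> WW q"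
  hence lq: "leaf q" using ltn assms(4) unfolding WW_def by blast
  have cl: "\<And>a b. a \<in> {p,q} \<Longrightarrow> E a b \<Longrightarrow> b \<in> {p,q}"
    using leaf_unique[OF assms(3,4)] leaf_unique[OF lq esym[OF assms(4)]] by auto
  have "dom p"
    unfolding dom_def using closure[OF ltn(1)[OF assms(4)] _ cl] assms(4) ltn by fastforce
  thus False using assms(2) by blast
qed

lemma noP4W:
  assumes n2: "2 \<le> n" and W: "WW a" and e: "E a b" "E b c" "E c d" "\<not> E a c" "\<not> E b d" "\<not> E a d"
    "a \<noteq> c" "b \<noteq> d" "a \<noteq> d"
  shows False
proof -
  have nc: "\<And>v. E a v \<Longrightarrow> \<not> E v d" using noP4[OF e] by blast
  obtain a' where a': "E a a'" "a' \<noteq> b" using other_nbr[OF n2 W] by blast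
  have a'c: "a' \<noteq> c" "a' \<noteq> d" using a' e by auto
  have "\<not> E a' c"
  proof
    assume "E a' c"
    show False
    proof (cases "E a' b")
      case True thus False using noDia[of b a a' c] e a' \<open>E a' c\<close> esym by blast
    next
      case False thus False using noC4[of a b c a'] e a' \<open>E a' c\<close> esym by blast
    qed
  qed
  have "\<not> E a' d" using nc a' by blast
  show False
  proof (cases "E a' b")
    case True
    show False
    proof (cases "\<exists>m. E a' m \<and> E m d")
      case True
      thus False using noP4[of a' b c d] \<open>E a' b\<close> e \<open>\<not> E a' c\<close> \<open>\<not> E a' d\<close> a'c by blast
    next
      case False
      thus False using noF3[of b a a' c d] \<open>E a' b\<close> e a' \<open>\<not> E a' c\<close> \<open>\<not> E a' d\<close> a'c nc esym by blast
    qed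
  next
    case False
    show False
    proof (cases "\<exists>m. E a' m \<and> E m c")
      case True
      thus False using noP4[of a' a b c] False e a' \<open>\<not> E a' c\<close> a'c esym by blast
    next
      case nc2: False
      show False using noP5[of a' a b c d] False e a' \<open>\<not> E a' c\<close> \<open>\<not> E a' d\<close> a'c nc nc2 esym by blast
    qed
  qed
qed

lemma W_closure:
  assumes n2: "2 \<le> n" and v: "WW v" and u: "WW u" "u \<noteq> v" "\<not> E v u"
  shows "\<exists>u' z. WW u' \<and> u' \<noteq> v \<and> \<not> E v u' \<and> WW z \<and> E v z \<and> E z u'"
proof (rule ccontr)
  assume H: "\<not> ?thesis"
  define S where "S = {x. x = v \<or> (WW x \<and> E v x) \<or> (leaf x \<and> (\<exists>r. (r = v \<or> (WW r \<and> E v r)) \<and> E x r))}"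
  have cl: "y \<in> S" if "x \<in> S" "E x y" for x y
  proof -
    have y: "leaf y \<or> WW y" using leaf_or_W ltn(2)[OF that(2)] by blast
    from that(1) consider "x = v" | "WW x \<and> E v x" | "leaf x \<and> (\<exists>r. (r = v \<or> (WW r \<and> E v r)) \<and> E x r)"
      unfolding S_def by blast
    thus ?thesis
    proof cases
      case 1 thus ?thesis using y that(2) esym unfolding S_def by blast
    next
      case 2
      show ?thesis
      proof (cases "y = v \<or> leaf y")
        case True thus ?thesis using 2 that(2) esym unfolding S_def by blast
      next
        case False
        hence "WW y" "y \<noteq> v" using y by auto
        hence "E v y" using H 2 that(2) by blast
        thus ?thesis using \<open>WW y\<close> unfolding S_def by blast
      qed
    next
      case 3
      then obtain r where r: "r = v \<or> (WW r \<and> E v r)" "E x r" by blast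
      have "y = r" using leaf_unique 3 r(2) that(2) by blast
      thus ?thesis using r unfolding S_def by blast
    qed
  qed
  have "u \<in> S" using closure[of v S u] v u cl unfolding S_def WW_def by blast
  thus False using u unfolding S_def WW_def by blast
qed

definition dW :: "nat \<Rightarrow> nat" where "dW x = card {y. WW y \<and> E x y}"

lemma finW: "finite {y. WW y \<and> E x y}"
  by (rule finite_subset[of _ "{0..<n}"]) (auto simp: WW_def)

lemma W_dom_exists:
  assumes n2: "2 \<le> n" and ex: "\<exists>x. WW x"
  shows "\<exists>w. WW w \<and> (\<forall>u. WW u \<and> u \<noteq> w \<longrightarrow> E w u)"
proof -
  have fin: "finite {x. WW x}" by (rule finite_subset[of _ "{0..<n}"]) (auto simp: WW_def)
  have bound: "\<forall>y. WW y \<longrightarrow> dW y < Suc n"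
  proof (intro allI impI)
    fix y
    have "{x. WW x \<and> E y x} \<subseteq> {0..<n}" by (auto simp: WW_def)
    hence "dW y \<le> n" unfolding dW_def using card_mono[of "{0..<n}"] by fastforce
    thus "dW y < Suc n" by simp
  qed
  obtain x0 where x0: "WW x0" using ex by blast
  obtain w where w: "WW w" and wmax': "\<forall>x. WW x \<longrightarrow> dW x \<le> dW w"
    using ex_has_greatest_nat[of WW x0 dW "Suc n", OF x0 bound] by blast
  have wmax: "\<And>x. WW x \<Longrightarrow> dW x \<le> dW w" using wmax' by blast
  have "\<forall>u. WW u \<and> u \<noteq> w \<longrightarrow> E w u"
  proof (rule ccontr)
    assume "\<not> ?thesis"
    then obtain u where u: "WW u" "u \<noteq> w" "\<not> E w u" by blast
    obtain u' z where uz: "WW u'" "u' \<noteq> w" "\<not> E w u'" "WW z" "E w z" "E z u'"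
      using W_closure[OF n2 w u] by blast
    show False
    proof (cases "\<exists>x. WW x \<and> E w x \<and> x \<noteq> z \<and> \<not> E z x")
      case True
      then obtain x where x: "WW x" "E w x" "x \<noteq> z" "\<not> E z x" by blast
      have xu: "x \<noteq> u'" using x uz by blast
      show False
      proof (cases "E x u'")
        case True
        thus False using noC4[of x w z u'] x uz esym by blast
      next
        case False
        thus False using noP4W[OF n2 x(1), of w z u'] x uz xu esym by blast
      qed
    next
      case False
      have sub: "({y. WW y \<and> E w y} - {z}) \<union> {w, u'} \<subseteq> {y. WW y \<and> E z y}"
      proof
        fix y assume y: "y \<in> ({y. WW y \<and> E w y} - {z}) \<union> {w, u'}"
        show "y \<in> {y. WW y \<and> E z y}"
        proof (cases "y = w \<or> y = u'")
          case True thus ?thesis using uz w esym[OF uz(5)] by auto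
        next
          case f2: False
          hence "WW y" "E w y" "y \<noteq> z" using y by auto
          thus ?thesis using False by blast
        qed
      qed
      have disj: "w \<notin> {y. WW y \<and> E w y} - {z}" "u' \<notin> {y. WW y \<and> E w y} - {z}" "w \<noteq> u'"
        using irr uz by auto
      have "card (({y. WW y \<and> E w y} - {z}) \<union> {w, u'}) = card ({y. WW y \<and> E w y} - {z}) + 2"
        using disj finW by (subst card_Un_disjoint) auto
      also have "card ({y. WW y \<and> E w y} - {z}) = dW w - 1"
        unfolding dW_def using uz finW by (subst card_Diff_singleton) auto
      finally have "card (({y. WW y \<and> E w y} - {z}) \<union> {w, u'}) = dW w - 1 + 2" .
      moreover have "card (({y. WW y \<and> E w y} - {z}) \<union> {w, u'}) \<le> dW z"
        unfolding dW_def by (rule card_mono[OF finW sub])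
      moreover have "dW w \<ge> 1"
      proof -
        have "z \<in> {y. WW y \<and> E w y}" using uz by blast
        hence "card {y. WW y \<and> E w y} \<noteq> 0" using finW by auto
        thus ?thesis unfolding dW_def by simp
      qed
      ultimately show False using wmax[OF uz(4)] by linarith
    qed
  qed
  thus ?thesis using w by blast
qed

lemma W_P3free:
  assumes w: "WW w" "\<forall>u. WW u \<and> u \<noteq> w \<longrightarrow> E w u"
    and "WW x" "WW y" "WW z" "x \<noteq> w" "y \<noteq> w" "z \<noteq> w" "E x y" "E y z" "x \<noteq> z"
  shows "E x z"
  using noDia[of w x y z] assms by blast

lemma W_clique:
  assumes n2: "2 \<le> n" and nd: "\<not> (\<exists>v. dom v)" and ex: "\<exists>x. WW x"
  shows "\<And>x y. WW x \<Longrightarrow> WW y \<Longrightarrow> x \<noteq> y \<Longrightarrow> E x y"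
proof (rule ccontr)
  fix x1 y1 assume x1: "WW x1" "WW y1" "x1 \<noteq> y1" "\<not> E x1 y1"
  obtain w where w: "WW w" "\<forall>u. WW u \<and> u \<noteq> w \<longrightarrow> E w u" using W_dom_exists[OF n2 ex] by blast
  have x1w: "x1 \<noteq> w" "y1 \<noteq> w" using w x1 esym by blast+
  obtain p where p: "p < n" "p \<noteq> w" "\<not> E w p" using nd w unfolding dom_def WW_def by blast
  have lp: "leaf p" using p w leaf_or_W by blast
  then obtain x where px: "E p x" unfolding leaf_def by blast
  have Wx: "WW x" using leaf_nbr_W[OF n2 nd lp px] .
  have xw: "x \<noteq> w" using px p esym by blast
  have pu: "\<And>v. E p v \<Longrightarrow> v = x" using leaf_unique[OF lp px] by blast
  obtain y where y: "WW y" "y \<noteq> w" "y \<noteq> x" "\<not> E x y"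
  proof -
    consider "x = x1" | "x = y1" | "x \<noteq> x1" "x \<noteq> y1" by blast
    thus ?thesis
    proof cases
      case 1 thus ?thesis using that x1 x1w by blast
    next
      case 2 thus ?thesis using that x1 x1w esym by blast
    next
      case 3
      show ?thesis
      proof (cases "E x x1 \<and> E x y1")
        case True
        hence "E x1 y1" using W_P3free[OF w, of x1 x y1] x1 x1w Wx xw esym by blast
        thus ?thesis using x1 by blast
      next
        case False thus ?thesis using that x1 x1w 3 by blast
      qed
    qed
  qed
  have wy: "E w y" "E w x" using w y Wx xw by blast+
  obtain z where z: "E y z" "z \<noteq> w" using other_nbr[OF n2 y(1)] by blast
  have zx: "z \<noteq> x" using z y esym by blast
  have Wnl: "\<And>q. WW q \<Longrightarrow> \<not> leaf q" unfolding WW_def by blast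
  have yp: "y \<noteq> p" using Wnl y lp by blast
  have "\<not> E y p" using pu[of y] y esym[of y p] by blast
  note yp = yp this
  have zp: "z \<noteq> p" using pu[of y] z y esym[of y p] by blast
  show False
  proof (cases "WW z")
    case True
    have "\<not> E x z"
    proof
      assume "E x z"
      hence "E x y" using W_P3free[OF w, of x z y] True Wx y z xw zx esym by blast
      thus False using y by blast
    qed
    note nxz = this
    have wz: "E w z" using w True z by blast
    have a1: "\<And>v. E y v \<Longrightarrow> \<not> E v p" using pu y esym by blast
    have a2: "\<And>v. E z v \<Longrightarrow> \<not> E v p" using pu nxz esym by blast
    have nzp: "\<not> E z p" using pu esym zx by blast
    have nyx: "\<not> E y x" "\<not> E z x" using y nxz esym by blast+
    have wp: "w \<noteq> p" using p by blast
    show False by (rule noF3[of w y z x p]) (use wy wz z px esym[OF px] nyx p y zx zp yp nzp a1 a2 wp in auto)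
  next
    case False
    hence lz: "leaf z" using leaf_or_W ltn z by blast
    have zu: "\<And>v. E z v \<Longrightarrow> v = y" using leaf_unique[OF lz esym[OF z(1)]] .
    have b1: "\<not> E p w" "p \<noteq> w" using pu xw p by blast+
    have b2: "\<not> E w z" using zu[of w] esym[of w z] y(2) by blast
    have b3: "\<And>v. E p v \<Longrightarrow> \<not> E v y" using pu y by blast
    have b4a: "\<not> E x z" using zu[of x] esym[of x z] y(3) by blast
    have b4b: "\<not> E v z" if "E x v" for v
    proof
      assume "E v z" hence "v = y" using zu esym by blast
      thus False using that y(4) by simp
    qed
    note b4 = b4a b4b
    have b5: "\<not> E p z" using pu zx by blast
    have b6: "w \<noteq> z" "x \<noteq> y" "x \<noteq> z" "p \<noteq> y" "p \<noteq> z" using z y zx yp zp by auto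
    show False by (rule noP5[of p x w y z]) (use px wy esym[OF wy(2)] z b1 b2 b3 b4 b5 b6 y pu[of y] in auto)
  qed
qed

lemma one_leaf:
  assumes n2: "2 \<le> n" and nd: "\<not> (\<exists>v. dom v)" and cl: "\<And>x y. WW x \<Longrightarrow> WW y \<Longrightarrow> x \<noteq> y \<Longrightarrow> E x y"
    and p: "leaf p" "E p x" and q: "leaf q" "E q x"
  shows "p = q"
proof (rule ccontr)
  assume pq: "p \<noteq> q"
  have Wx: "WW x" using leaf_nbr_W[OF n2 nd p] .
  obtain u where u: "u < n" "u \<noteq> x" "\<not> E x u" using nd Wx unfolding dom_def WW_def by blast
  have lu: "leaf u" using u cl Wx leaf_or_W by blast
  then obtain w' where uw: "E u w'" unfolding leaf_def by blast
  have Ww: "WW w'" using leaf_nbr_W[OF n2 nd lu uw] .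
  have wx: "w' \<noteq> x" using uw u esym by blast
  have xw: "E x w'" using cl Wx Ww wx by blast
  have pu: "\<And>v. E p v \<Longrightarrow> v = x" using leaf_unique[OF p] by blast
  have qu: "\<And>v. E q v \<Longrightarrow> v = x" using leaf_unique[OF q] by blast
  have uu: "\<And>v. E u v \<Longrightarrow> v = w'" using leaf_unique[OF lu uw] by blast
  have Wnl: "\<And>q. WW q \<Longrightarrow> \<not> leaf q" unfolding WW_def by blast
  have ne: "p \<noteq> w'" "q \<noteq> w'" using Ww Wnl p q by blast+
  have ne2: "p \<noteq> u" "q \<noteq> u" using p q u(3) esym[of p x] esym[of q x] by blast+
  have qx: "q \<noteq> x" "p \<noteq> x" using Wx Wnl q p by blast+
  have c1: "\<not> E p q" "\<not> E p w'" "\<not> E q w'" "\<not> E p u" "\<not> E q u"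
    using pu[of q] pu[of w'] qu[of w'] pu[of u] qu[of u] qx wx u(2) by blast+
  have c2: "\<And>v. E p v \<Longrightarrow> \<not> E v u" "\<And>v. E q v \<Longrightarrow> \<not> E v u" using pu qu u(3) by blast+
  show False by (rule noF1[of x p q w' u]) (use esym[OF p(2)] esym[OF q(2)] xw esym[OF uw] c1 c2 ne ne2 pq u in auto)
qed

end


lemma iso_from_list:
  assumes d: "distinct VL" and s: "set VL = {0..<n}"
    and e: "\<And>i j. i < n \<Longrightarrow> j < n \<Longrightarrow> E (VL!i) (VL!j) \<longleftrightarrow> F i j"
  shows "graph_iso n E n F"
proof -
  have len: "length VL = n" using distinct_card[OF d] s by simp
  define g where "g = (\<lambda>i. VL ! i)"
  have bg: "bij_betw g {0..<n} {0..<n}"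
    unfolding g_def using bij_betw_nth[OF d, of "{..<length VL}" "set VL"] len s
    by (simp add: lessThan_atLeast0)
  define f where "f = inv_into {0..<n} g"
  have bf: "bij_betw f {0..<n} {0..<n}" unfolding f_def by (rule bij_betw_inv_into[OF bg])
  have gf: "g (f x) = x" if "x < n" for x
    unfolding f_def using that bg by (simp add: bij_betw_def f_inv_into_f)
  have fx: "f x < n" if "x < n" for x using bf that by (auto simp: bij_betw_def)
  show ?thesis unfolding graph_iso_def
  proof (intro exI conjI allI impI)
    show "bij_betw f {0..<n} {0..<n}" by (rule bf)
    fix x y assume "x < n" "y < n"
    thus "E x y \<longleftrightarrow> F (f x) (f y)" using e[OF fx fx, of x y] gf unfolding g_def by metis
  qed
qed

lemma concat_block:
  assumes "j < length (concat ls)"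
  shows "\<exists>i < length ls. concat ls ! j \<in> set (ls ! i) \<and> block_of (map length ls) (Suc j) = i"
  using assms
proof (induct ls arbitrary: j)
  case Nil thus ?case by simp
next
  case (Cons a ls)
  show ?case
  proof (cases "j < length a")
    case True
    have "block_of (map length (a # ls)) (Suc j) = 0"
      unfolding block_of_def using True by (intro Least_equality) auto
    thus ?thesis using True by (auto simp: nth_append)
  next
    case False
    define j' where "j' = j - length a"
    have j': "j' < length (concat ls)" using Cons(2) False unfolding j'_def by simp
    obtain i where i: "i < length ls" "concat ls ! j' \<in> set (ls ! i)" "block_of (map length ls) (Suc j') = i"
      using Cons(1)[OF j'] by blast
    have "block_of (map length (a # ls)) (Suc j) = Suc (block_of (map length ls) (Suc j'))"
    proof -
      have ex: "Suc j \<le> sum_list (take (Suc (length ls)) (map length (a # ls)))"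
        using Cons(2) by (simp add: length_concat)
      have "(LEAST i. Suc j \<le> sum_list (take (Suc i) (map length (a # ls))))
          = Suc (LEAST m. Suc j \<le> sum_list (take (Suc (Suc m)) (map length (a # ls))))"
        by (rule Least_Suc[where P = "\<lambda>i. Suc j \<le> sum_list (take (Suc i) (map length (a # ls)))", OF ex]) (use False in simp)
      also have "(LEAST m. Suc j \<le> sum_list (take (Suc (Suc m)) (map length (a # ls))))
          = (LEAST m. Suc j' \<le> sum_list (take (Suc m) (map length ls)))"
        using False unfolding j'_def by (intro arg_cong[where f = Least] ext) auto
      finally show ?thesis unfolding block_of_def .
    qed
    thus ?thesis using i False unfolding j'_def by (auto simp: nth_append intro!: exI[of _ "Suc i"])
  qed
qed



context G begin

definition att :: "nat \<Rightarrow> nat" where "att p = (THE q. E p q)"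

lemma att: "leaf p \<Longrightarrow> E p (att p)"
  unfolding att_def leaf_def by (metis (mono_tags, lifting) theI)

lemma step2:
  assumes n2: "2 \<le> n" and nd: "\<not> (\<exists>v. dom v)"
  shows "\<exists>s t. 2 \<le> t \<and> t \<le> s \<and> s + t = n \<and> graph_iso n E n (Kst s t)"
proof -
  have exW: "\<exists>x. WW x"
  proof (cases "leaf 0")
    case True thus ?thesis using leaf_nbr_W[OF n2 nd True att[OF True]] by blast
  next
    case False thus ?thesis using n2 unfolding WW_def by (intro exI[of _ 0]) simp
  qed
  note cl = W_clique[OF n2 nd exW]
  define L where "L = {p. leaf p}"
  have finL: "finite L" unfolding L_def by (rule finite_subset[of _ "{0..<n}"]) (auto simp: leaf_def)
  define Ls where "Ls = sorted_list_of_set L"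
  define A where "A = map att Ls"
  define Rest where "Rest = sorted_list_of_set ({x. WW x} - set A)"
  define VL where "VL = A @ Rest @ Ls"
  have finW: "finite ({x. WW x} - set A)" by (rule finite_subset[of _ "{0..<n}"]) (auto simp: WW_def)
  have sLs: "set Ls = L" unfolding Ls_def using finL by simp
  have sRest: "set Rest = {x. WW x} - set A" unfolding Rest_def using finW by simp
  have dLs: "distinct Ls" "distinct Rest" unfolding Ls_def Rest_def by simp_all
  have inj: "inj_on att L"
  proof (rule inj_onI)
    fix p q assume "p \<in> L" "q \<in> L" "att p = att q"
    hence lp: "leaf p" "leaf q" "att p = att q" unfolding L_def by auto
    have "E q (att p)" using att[OF lp(2)] lp(3) by simp
    thus "p = q" using one_leaf[OF n2 nd cl lp(1) att[OF lp(1)] lp(2)] by blast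
  qed
  have dA: "distinct A" unfolding A_def using dLs inj sLs by (simp add: distinct_map)
  have AW: "set A \<subseteq> {x. WW x}" unfolding A_def using sLs att leaf_nbr_W[OF n2 nd] unfolding L_def by auto
  have WL: "\<And>x. WW x \<Longrightarrow> \<not> leaf x" unfolding WW_def by blast
  have dVL: "distinct VL" unfolding VL_def using dA dLs sRest sLs AW WL unfolding L_def by auto
  have sVL: "set VL = {0..<n}"
  proof -
    have "set VL = set A \<union> ({x. WW x} - set A) \<union> L" using sRest sLs unfolding VL_def by auto
    also have "\<dots> = {x. WW x} \<union> L" using AW by auto
    also have "\<dots> = {0..<n}" unfolding L_def using leaf_or_W by (auto simp: WW_def leaf_def)
    finally show ?thesis .
  qed
  have lenVL: "length VL = n" using distinct_card[OF dVL] sVL by simp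
  define t where "t = length Ls"
  define s where "s = length A + length Rest"
  have lA: "length A = t" unfolding A_def t_def by simp
  have st: "s + t = n" using lenVL unfolding VL_def s_def t_def by simp
  have ts: "t \<le> s" unfolding s_def lA by simp
  have lowA: "VL ! i = att (Ls ! i)" if "i < t" for i
    using that lA unfolding VL_def A_def t_def by (simp add: nth_append)
  have lowW: "WW (VL ! i)" if "i < s" for i
  proof -
    have "VL ! i \<in> set A \<union> set Rest" using that unfolding VL_def s_def
      by (auto simp: nth_append)
    thus ?thesis using AW sRest by auto
  qed
  have high: "VL ! i = Ls ! (i - s) \<and> leaf (VL ! i)" if "s \<le> i" "i < n" for i
  proof -
    have "VL ! i = ((A @ Rest) @ Ls) ! i" unfolding VL_def by simp
    also have "\<dots> = Ls ! (i - length (A @ Rest))"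
    proof -
      have nlt: "\<not> i < length (A @ Rest)" using that(1) by (simp add: s_def)
      show ?thesis by (simp only: nth_append[of "A @ Rest" Ls] nlt if_False)
    qed
    also have "\<dots> = Ls ! (i - s)" unfolding s_def by simp
    finally have "VL ! i = Ls ! (i - s)" .
    moreover have "i - s < length Ls" using that st unfolding t_def by simp
    ultimately have "VL ! i \<in> L" using sLs nth_mem by metis
    thus ?thesis using \<open>VL ! i = Ls ! (i - s)\<close> unfolding L_def by simp
  qed
  have t2: "2 \<le> t"
  proof (rule ccontr)
    assume "\<not> 2 \<le> t"
    hence "t = 0 \<or> t = 1" by auto
    thus False
    proof
      assume "t = 0"
      hence "L = {}" using sLs unfolding t_def by auto
      hence nl: "\<And>x. \<not> leaf x" unfolding L_def by auto
      have "dom 0" unfolding dom_def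
      proof (intro conjI allI impI)
        show "0 < n" using n2 by simp
        fix u assume "u < n" "u \<noteq> 0"
        thus "E 0 u" using cl[of 0 u] nl n2 unfolding WW_def by simp
      qed
      thus False using nd by blast
    next
      assume "t = 1"
      then obtain p where "Ls = [p]" unfolding t_def by (cases Ls) auto
      hence Lp: "L = {p}" using sLs by auto
      hence lp: "leaf p" unfolding L_def by auto
      have "dom (att p)"
        unfolding dom_def
      proof (intro conjI allI impI)
        show "att p < n" using ltn(2)[OF att[OF lp]] .
        fix u assume u: "u < n" "u \<noteq> att p"
        show "E (att p) u"
        proof (cases "leaf u")
          case True thus ?thesis using Lp esym[OF att[OF lp]] unfolding L_def by auto
        next
          case False
          thus ?thesis using cl u leaf_nbr_W[OF n2 nd lp att[OF lp]] by (auto simp: WW_def)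
        qed
      qed
      thus False using nd by blast
    qed
  qed
  have iff: "E (VL ! i) (VL ! j) \<longleftrightarrow> Kst s t i j" if ij: "i < n" "j < n" for i j
  proof -
    have pe: "pendant_edge s t x y \<longleftrightarrow> s \<le> x \<and> y = x - s" if "x < n" for x y
      using that st unfolding pendant_edge_def by auto
    have nth_inj: "VL ! x = VL ! y \<longleftrightarrow> x = y" if "x < n" "y < n" for x y
      using nth_eq_iff_index_eq[OF dVL] that lenVL by simp
    consider "i < s" "j < s" | "i < s" "s \<le> j" | "s \<le> i" "j < s" | "s \<le> i" "s \<le> j" by linarith
    thus ?thesis
    proof cases
      case 1
      have "E (VL ! i) (VL ! j) \<longleftrightarrow> i \<noteq> j"
      proof
        assume "E (VL ! i) (VL ! j)" thus "i \<noteq> j" using irr by auto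
      next
        assume "i \<noteq> j" hence "VL ! i \<noteq> VL ! j" using nth_inj[OF ij] by simp
        thus "E (VL ! i) (VL ! j)" using cl[OF lowW[OF 1(1)] lowW[OF 1(2)]] by simp
      qed
      thus ?thesis unfolding Kst_def using 1 pe[OF ij(1)] pe[OF ij(2)] by auto
    next
      case 2
      obtain hj: "VL ! j = Ls ! (j - s)" "leaf (VL ! j)" using high[OF 2(2) ij(2)] by blast
      have jt: "j - s < t" using ij st 2 by simp
      have "E (VL ! i) (VL ! j) \<longleftrightarrow> VL ! i = att (VL ! j)"
      proof
        assume "E (VL ! i) (VL ! j)"
        thus "VL ! i = att (VL ! j)" using leaf_unique[OF hj(2) att[OF hj(2)] esym] by blast
      next
        assume "VL ! i = att (VL ! j)"
        thus "E (VL ! i) (VL ! j)" using esym[OF att[OF hj(2)]] by simp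
      qed
      also have "\<dots> \<longleftrightarrow> VL ! i = VL ! (j - s)" using lowA[OF jt] hj by simp
      also have "\<dots> \<longleftrightarrow> i = j - s" using nth_inj ij jt ts st by simp
      finally show ?thesis unfolding Kst_def using 2 pe[OF ij(1)] pe[OF ij(2)] by auto
    next
      case 3
      obtain hi: "VL ! i = Ls ! (i - s)" "leaf (VL ! i)" using high[OF 3(1) ij(1)] by blast
      have it: "i - s < t" using ij st 3 by simp
      have "E (VL ! i) (VL ! j) \<longleftrightarrow> VL ! j = att (VL ! i)"
      proof
        assume "E (VL ! i) (VL ! j)"
        thus "VL ! j = att (VL ! i)" using leaf_unique[OF hi(2) att[OF hi(2)]] by blast
      next
        assume "VL ! j = att (VL ! i)"
        thus "E (VL ! i) (VL ! j)" using att[OF hi(2)] by simp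
      qed
      also have "\<dots> \<longleftrightarrow> VL ! j = VL ! (i - s)" using lowA[OF it] hi by simp
      also have "\<dots> \<longleftrightarrow> j = i - s" using nth_inj ij it ts st by simp
      finally show ?thesis unfolding Kst_def using 3 pe[OF ij(1)] pe[OF ij(2)] by auto
    next
      case 4
      have li: "leaf (VL ! i)" "leaf (VL ! j)" using high[OF 4(1) ij(1)] high[OF 4(2) ij(2)] by auto
      have "\<not> E (VL ! i) (VL ! j)"
      proof
        assume "E (VL ! i) (VL ! j)"
        hence "WW (VL ! j)" by (rule leaf_nbr_W[OF n2 nd li(1)])
        thus False using li(2) WL by blast
      qed
      moreover have "\<not> Kst s t i j" unfolding Kst_def using 4 pe[OF ij(1)] pe[OF ij(2)] ts ij st by auto
      ultimately show ?thesis by simp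
    qed
  qed
  have "graph_iso n E n (Kst s t)" by (rule iso_from_list[where E=E and F="Kst s t", OF dVL sVL iff])
  thus ?thesis using t2 ts st by blast
qed

end


context G begin

lemma step1:
  assumes dv: "dom v"
  shows "graph_iso n E n (complete_graph n) \<or>
    (\<exists>ns. length ns \<ge> 2 \<and> (\<forall>m\<in>set ns. 0 < m) \<and> sum_list ns + 1 = n \<and> graph_iso n E n (Kcliques ns))"
proof -
  have vn: "v < n" and vE: "\<And>u. u < n \<Longrightarrow> u \<noteq> v \<Longrightarrow> E v u" using dv unfolding dom_def by auto
  define R where "R = {0..<n} - {v}"
  have tr: "E x z" if "x \<in> R" "y \<in> R" "z \<in> R" "E x y" "E y z" "x \<noteq> z" for x y z
  proof (rule ccontr)
    assume "\<not> E x z"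
    moreover have "E v x" "E v y" "E v z" using that vE unfolding R_def by auto
    ultimately show False using noDia[of v x y z] that by blast
  qed
  show ?thesis
  proof (cases "\<forall>x\<in>R. \<forall>y\<in>R. x \<noteq> y \<longrightarrow> E x y")
    case True
    have "graph_iso n E n (complete_graph n)"
    proof (rule iso_from_list[where E=E and F="complete_graph n" and VL="[0..<n]"])
      fix i j assume ij: "i < n" "j < n"
      have "E i j \<longleftrightarrow> i \<noteq> j"
      proof
        assume "E i j" thus "i \<noteq> j" using irr by auto
      next
        assume "i \<noteq> j"
        thus "E i j"
        proof (cases "i = v \<or> j = v")
          case True thus ?thesis using vE[of j] vE[of i] esym[of v i] ij \<open>i \<noteq> j\<close> by auto
        next
          case False thus ?thesis using \<open>\<forall>x\<in>R. \<forall>y\<in>R. x \<noteq> y \<longrightarrow> E x y\<close> ij \<open>i \<noteq> j\<close> unfolding R_def by auto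
        qed
      qed
      thus "E ([0..<n] ! i) ([0..<n] ! j) \<longleftrightarrow> complete_graph n i j"
        using ij unfolding complete_graph_def by simp
    qed auto
    thus ?thesis by blast
  next
    case False
    then obtain x1 y1 where xy1: "x1 \<in> R" "y1 \<in> R" "x1 \<noteq> y1" "\<not> E x1 y1" by blast
    define K where "K = (\<lambda>x. {y \<in> R. y = x \<or> E x y})"
    have finR: "finite R" unfolding R_def by simp
    have finK: "finite (K x)" for x unfolding K_def using finR by simp
    have k1: "x \<in> K x" if "x \<in> R" for x using that unfolding K_def by simp
    have k2: "y = z \<or> E y z" if "x \<in> R" "y \<in> K x" "z \<in> K x" for x y z
    proof (cases "y = z")
      case False
      from that consider "y = x" | "E x y" and "y \<in> R" unfolding K_def by blast
      thus ?thesis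
      proof cases
        case 1 thus ?thesis using that False unfolding K_def by auto
      next
        case 2
        from that(3) have "z \<in> R" "z = x \<or> E x z" unfolding K_def by auto
        thus ?thesis using 2 False tr[of y x z] that(1) esym[of x y] by blast
      qed
    qed simp
    have k3: "K x = K y" if "x \<in> R" "y \<in> R" "x = y \<or> E x y" for x y
    proof -
      have sub: "K a \<subseteq> K b" if "a \<in> R" "b \<in> R" "a = b \<or> E b a" for a b
      proof
        fix z assume z: "z \<in> K a"
        hence zR: "z \<in> R" "z = a \<or> E a z" unfolding K_def by auto
        show "z \<in> K b"
        proof (cases "z = b")
          case True thus ?thesis using that unfolding K_def by auto
        next
          case False
          have "E b z"
          proof (cases "z = a")
            case True thus ?thesis using that False by auto
          next
            case za: False
            hence "E a z" using zR by simp
            thus ?thesis using that tr[of b a z] zR False by auto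
          qed
          thus ?thesis using zR unfolding K_def by auto
        qed
      qed
      show ?thesis using sub[of x y] sub[of y x] that esym[of x y] by blast
    qed
    define repset where "repset = {x \<in> R. \<forall>y\<in>R. E x y \<longrightarrow> x < y}"
    have k4: "r = r'" if "r \<in> repset" "r' \<in> repset" "z \<in> K r" "z \<in> K r'" for r r' z
    proof -
      have rR: "r \<in> R" "r' \<in> R" using that unfolding repset_def by auto
      have zR: "z \<in> R" using that(3) unfolding K_def by auto
      have "K r = K z" using k3[OF rR(1) zR] that(3) unfolding K_def by auto
      moreover have "K r' = K z" using k3[OF rR(2) zR] that(4) unfolding K_def by auto
      ultimately have "r' \<in> K r" using k1[OF rR(2)] by simp
      hence "r' = r \<or> E r r'" unfolding K_def by auto
      thus ?thesis
      proof
        assume "E r r'"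
        hence "r < r'" "r' < r" using that rR esym[of r r'] unfolding repset_def by auto
        thus ?thesis by simp
      qed simp
    qed
    define rep where "rep = (\<lambda>x. Min (K x))"
    have rep: "rep x \<in> repset \<and> x \<in> K (rep x)" if "x \<in> R" for x
    proof -
      have ne: "K x \<noteq> {}" using k1[OF that] by auto
      have rK: "rep x \<in> K x" unfolding rep_def using Min_in[OF finK ne] .
      hence rR: "rep x \<in> R" unfolding K_def by auto
      have Kr: "K (rep x) = K x" using k3[OF rR that] rK esym[of x "rep x"] unfolding K_def by auto
      have "\<forall>y\<in>R. E (rep x) y \<longrightarrow> rep x < y"
      proof (intro ballI impI)
        fix y assume "y \<in> R" "E (rep x) y"
        hence "y \<in> K x" using Kr unfolding K_def by auto
        hence "rep x \<le> y" unfolding rep_def using Min_le[OF finK] by blast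
        moreover have "rep x \<noteq> y" using \<open>E (rep x) y\<close> irr by auto
        ultimately show "rep x < y" by simp
      qed
      thus ?thesis using rR Kr k1[OF that] unfolding repset_def by auto
    qed
    have finrep: "finite repset" unfolding repset_def using finR by simp
    define reps where "reps = sorted_list_of_set repset"
    have sreps: "set reps = repset" "distinct reps" unfolding reps_def using finrep by auto
    define ls where "ls = map (\<lambda>r. sorted_list_of_set (K r)) reps"
    define ns where "ns = map length ls"
    define VL where "VL = v # concat ls"
    have lsi: "set (ls ! i) = K (reps ! i)" "i < length ls \<Longrightarrow> reps ! i \<in> repset" if "i < length ls" for i
      using that finK sreps unfolding ls_def by auto
    have repR: "repset \<subseteq> R" unfolding repset_def by auto
    have injK: "inj_on (\<lambda>r. sorted_list_of_set (K r)) repset"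
    proof (rule inj_onI)
      fix r r' assume rr: "r \<in> repset" "r' \<in> repset" "sorted_list_of_set (K r) = sorted_list_of_set (K r')"
      hence "set (sorted_list_of_set (K r)) = set (sorted_list_of_set (K r'))" by simp
      hence "K r = K r'" using finK[of r] finK[of r'] by simp
      thus "r = r'" using k4[OF rr(1,2)] k1 repR rr by blast
    qed
    have dconcat: "distinct (concat ls)"
    proof (rule distinct_concat)
      show "distinct ls" unfolding ls_def using sreps injK by (simp add: distinct_map)
      show "\<And>ys. ys \<in> set ls \<Longrightarrow> distinct ys" unfolding ls_def by auto
      fix ys zs assume "ys \<in> set ls" "zs \<in> set ls" "ys \<noteq> zs"
      then obtain r r' where "r \<in> repset" "r' \<in> repset" "ys = sorted_list_of_set (K r)" "zs = sorted_list_of_set (K r')"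
        unfolding ls_def using sreps by auto
      note rr = this
      hence "r \<noteq> r'" using \<open>ys \<noteq> zs\<close> by auto
      hence "K r \<inter> K r' = {}" using k4[OF rr(1,2)] by blast
      thus "set ys \<inter> set zs = {}" using rr(3,4) finK[of r] finK[of r'] by simp
    qed
    have sconcat: "set (concat ls) = R"
    proof
      show "set (concat ls) \<subseteq> R" unfolding ls_def using finK by (auto simp: K_def)
      show "R \<subseteq> set (concat ls)"
      proof
        fix x assume "x \<in> R"
        hence "rep x \<in> repset" "x \<in> K (rep x)" using rep by auto
        thus "x \<in> set (concat ls)" unfolding ls_def using sreps finK by auto
      qed
    qed
    have dVL: "distinct VL" unfolding VL_def using dconcat sconcat by (auto simp: R_def)
    have sVL: "set VL = {0..<n}" unfolding VL_def using sconcat vn by (auto simp: R_def)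
    have lenVL: "length VL = n" using distinct_card[OF dVL] sVL by simp
    have sumns: "sum_list ns + 1 = n" using lenVL unfolding VL_def ns_def by (simp add: length_concat)
    have ns2: "length ns \<ge> 2"
    proof -
      have "rep x1 \<noteq> rep y1"
      proof
        assume "rep x1 = rep y1"
        hence "x1 \<in> K (rep x1)" "y1 \<in> K (rep x1)" using rep[OF xy1(1)] rep[OF xy1(2)] by auto
        hence "x1 = y1 \<or> E x1 y1" using k2[of "rep x1" x1 y1] rep[OF xy1(1)] repR by blast
        thus False using xy1 by blast
      qed
      hence "card {rep x1, rep y1} = 2" by simp
      moreover have "{rep x1, rep y1} \<subseteq> repset" using rep xy1 by auto
      ultimately have "2 \<le> card repset" using card_mono[OF finrep, of "{rep x1, rep y1}"] by simp
      moreover have "length ns = card repset" unfolding ns_def ls_def using distinct_card[OF sreps(2)] sreps(1) by simp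
      ultimately show ?thesis by simp
    qed
    have nspos: "\<forall>m\<in>set ns. 0 < m"
      unfolding ns_def ls_def using sreps finK k1 repR by (auto simp: card_gt_0_iff)
    have iff: "E (VL ! i) (VL ! j) \<longleftrightarrow> Kcliques ns i j" if ij: "i < n" "j < n" for i j
    proof -
      have nth_inj: "VL ! i = VL ! j \<longleftrightarrow> i = j" using nth_eq_iff_index_eq[OF dVL] ij lenVL by simp
      have K': "Kcliques ns i j \<longleftrightarrow> i \<noteq> j \<and> (i = 0 \<or> j = 0 \<or> block_of ns i = block_of ns j)"
        unfolding Kcliques_def using sumns ij by auto
      show ?thesis
      proof (cases "i = 0 \<or> j = 0")
        case True
        have Ev: "E v (VL ! k) \<longleftrightarrow> k \<noteq> 0" if k: "k < n" for k
        proof -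
          have "VL ! k \<in> set VL" using k lenVL by auto
          hence kn: "VL ! k < n" using sVL by auto
          have "VL ! k = v \<longleftrightarrow> k = 0" using nth_eq_iff_index_eq[OF dVL, of k 0] k lenVL unfolding VL_def by auto
          thus ?thesis using vE[OF kn] irr by auto
        qed
        have v0: "VL ! 0 = v" unfolding VL_def by simp
        have "E (VL ! i) (VL ! j) \<longleftrightarrow> i \<noteq> j"
        proof (cases "i = 0")
          case True thus ?thesis using Ev[OF ij(2)] v0 by auto
        next
          case False
          hence "j = 0" using \<open>i = 0 \<or> j = 0\<close> by simp
          thus ?thesis using Ev[OF ij(1)] v0 False esym[of v "VL ! i"] esym[of "VL ! i" v] by auto
        qed
        thus ?thesis using K' True by auto
      next
        case False
        then obtain i' j' where ij': "i = Suc i'" "j = Suc j'" by (metis not0_implies_Suc)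
        have lc: "i' < length (concat ls)" "j' < length (concat ls)" using ij ij' lenVL unfolding VL_def by auto
        obtain bi where bi: "bi < length ls" "concat ls ! i' \<in> set (ls ! bi)" "block_of ns i = bi"
          using concat_block[OF lc(1)] ij' unfolding ns_def by blast
        obtain bj where bj: "bj < length ls" "concat ls ! j' \<in> set (ls ! bj)" "block_of ns j = bj"
          using concat_block[OF lc(2)] ij' unfolding ns_def by blast
        define x where "x = concat ls ! i'"
        define y where "y = concat ls ! j'"
        have xy: "VL ! i = x" "VL ! j = y" unfolding x_def y_def VL_def ij' by simp_all
        have xK: "x \<in> K (reps ! bi)" "y \<in> K (reps ! bj)" using bi bj lsi unfolding x_def y_def by auto
        have rb: "reps ! bi \<in> repset" "reps ! bj \<in> repset" using lsi bi bj by auto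
        have rR: "reps ! bi \<in> R" "x \<in> R" "y \<in> R" using rb repR xK unfolding K_def by auto
        have "E x y \<longleftrightarrow> i \<noteq> j \<and> bi = bj"
        proof
          assume exy: "E x y"
          hence "i \<noteq> j" using xy nth_inj irr by auto
          moreover have "K (reps ! bi) = K x" using k3[OF rR(1) rR(2)] xK unfolding K_def by auto
          hence "y \<in> K (reps ! bi)" using exy rR unfolding K_def by auto
          hence "reps ! bi = reps ! bj" using k4[OF rb] xK by blast
          hence "bi = bj" using nth_eq_iff_index_eq[OF sreps(2)] bi bj unfolding ls_def by simp
          ultimately show "i \<noteq> j \<and> bi = bj" by simp
        next
          assume h: "i \<noteq> j \<and> bi = bj"
          hence "x \<noteq> y" using xy nth_inj by auto
          thus "E x y" using k2[OF rR(1), of x y] xK h by auto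
        qed
        thus ?thesis using K' False xy bi bj by auto
      qed
    qed
    have "graph_iso n E n (Kcliques ns)" by (rule iso_from_list[where E=E and F="Kcliques ns", OF dVL sVL iff])
    thus ?thesis using ns2 nspos sumns by blast
  qed
qed

end


theorem lemma2p6:
  fixes n :: nat and E :: "nat \<Rightarrow> nat \<Rightarrow> bool"
  assumes "simple_graph n E"
    and "graph_connected n E"
    and "lambda2 (distance_matrix n E) \<le> (17 - sqrt 329) / 2"
  shows "graph_iso n E n (complete_graph n)
    \<or> (\<exists>s t. 2 \<le> t \<and> t \<le> s \<and> s + t = n \<and> graph_iso n E n (Kst s t))
    \<or> (\<exists>ns. length ns \<ge> 2 \<and> (\<forall>m\<in>set ns. 0 < m) \<and> sum_list ns + 1 = n
           \<and> graph_iso n E n (Kcliques ns))"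
proof -
  have l2: "lambda2 (distance_matrix n E) \<le> cr" using assms(3) c0_le_cr by linarith
  interpret G n E using assms(1,2) l2 by (unfold_locales)
  show ?thesis
  proof (cases "n \<le> 1")
    case True
    have "graph_iso n E n (complete_graph n)"
    proof (rule iso_from_list[where E=E and F="complete_graph n" and VL="[0..<n]"])
      fix i j assume ij: "i < n" "j < n"
      hence "i = j" using True by simp
      thus "E ([0..<n] ! i) ([0..<n] ! j) \<longleftrightarrow> complete_graph n i j"
        using ij irr unfolding complete_graph_def by simp
    qed auto
    thus ?thesis by blast
  next
    case False
    hence n2: "2 \<le> n" by simp
    show ?thesis
    proof (cases "\<exists>v. dom v")
      case True
      then obtain v where "dom v" by blast
      thus ?thesis using step1 by blast
    next
      case False
      thus ?thesis using step2[OF n2] by blast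
    qed
  qed
qed

end
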